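(* Let $U\neq0$, $2\le k<\lfloor L/2\rfloor$, and let $F_k$ be a $k$-local conserved quantity of the one-dimensional Hubbard model. For $\sigma\in\{\uparrow,\downarrow\}$ and $s\in\{+,-\}$, the coefficient in $F_k$ of the $k$-support basis element $c^{s}_{i,\sigma}c^{s}_{i+k-1,\sigma}$ (the basis element starting at site $i$ whose only non-identity factors are $e_{i,\sigma}=c^s_{i,\sigma}$ and $e_{i+k-1,\sigma}=c^{s}_{i+k-1,\sigma}$, with $c^+=c^\dagger$, $c^-=c$) is zero for every $i$.
   Context: Fermionic operators $c_{j,\sigma},c^\dagger_{j,\sigma}$, $j\in\{1,\dots,L\}$ with indices modulo $L$ (periodic boundary conditions), $\sigma\in\{\uparrow,\downarrow\}$, with canonical anticommutation relations; $n_{j,\sigma}=c^\dagger_{j,\sigma}c_{j,\sigma}$, $z_{j,\sigma}=2n_{j,\sigma}-1$. Hubbard Hamiltonian: $H=-2\sum_j\sum_\sigma(c^\dagger_{j,\sigma}c_{j+1,\sigma}+c^\dagger_{j+1,\sigma}c_{j,\sigma})+4U\sum_j(n_{j,\uparrow}-\tfrac12)(n_{j,\downarrow}-\tfrac12)$. An $l$-support basis element starting at site $i$ is $(e_{i,\uparrow}\cdots e_{i+l-1,\uparrow})(e_{i,\downarrow}\cdots e_{i+l-1,\downarrow})$ with $e_{j,\sigma}\in\{c_{j,\sigma},c^\dagger_{j,\sigma},z_{j,\sigma},I\}$, $(e_{i,\uparrow},e_{i,\downarrow})\neq(I,I)$, $(e_{i+l-1,\uparrow},e_{i+l-1,\downarrow})\neq(I,I)$.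 A $k$-local conserved quantity is $F_k=\sum_{l=1}^k\sum_{i=1}^L\sum_e c_e\,e$ (inner sum over $l$-support basis elements starting at $i$) with $[F_k,H]=0$ and some nonzero coefficient on a $k$-support basis element. *)

theory Defs
  imports Complex_Main
begin

text \<open>Fermionic Fock space of the Hubbard chain with L sites (0-indexed, 0..L-1),
  spin encoded as bool (True = up, False = down).
  Basis states of the Fock space are sets of occupied modes; an operator is
  represented by its matrix in this occupation-number basis.  The fermionic
  operators are built via a Jordan-Wigner construction with respect to a fixed
  ordering of the modes, so they satisfy the canonical anticommutation relations.\<close>

type_synonym mode = "nat \<times> bool"
type_synonym fop = "mode set \<Rightarrow> mode set \<Rightarrow> complex"

definition modes :: "nat \<Rightarrow> mode set" where
  "modes L = {0..<L} \<times> UNIV"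

definition configs :: "nat \<Rightarrow> mode set set" where
  "configs L = Pow (modes L)"

definition mode_rank :: "mode \<Rightarrow> nat" where
  "mode_rank m = 2 * fst m + (if snd m then 0 else 1)"

definition jw_sign :: "mode set \<Rightarrow> mode \<Rightarrow> complex" where
  "jw_sign S m = (-1) ^ card {m' \<in> S. mode_rank m' < mode_rank m}"

definition op_mul :: "nat \<Rightarrow> fop \<Rightarrow> fop \<Rightarrow> fop" where
  "op_mul L A B = (\<lambda>S' S. \<Sum>T\<in>configs L. A S' T * B T S)"

definition op_add :: "fop \<Rightarrow> fop \<Rightarrow> fop" where
  "op_add A B = (\<lambda>S' S. A S' S + B S' S)"

definition op_smult :: "complex \<Rightarrow> fop \<Rightarrow> fop" where
  "op_smult a A = (\<lambda>S' S. a * A S' S)"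

definition op_id :: fop where
  "op_id = (\<lambda>S' S. if S' = S then 1 else 0)"

definition ann :: "nat \<Rightarrow> nat \<Rightarrow> bool \<Rightarrow> fop" where
  "ann L j \<sigma> = (let m = (j mod L, \<sigma>) in
     (\<lambda>S' S. if m \<in> S \<and> S' = S - {m} then jw_sign S m else 0))"

text \<open>Creation operator (adjoint of ann; the matrix is real).\<close>
definition cre :: "nat \<Rightarrow> nat \<Rightarrow> bool \<Rightarrow> fop" where
  "cre L j \<sigma> = (\<lambda>S' S. ann L j \<sigma> S S')"

definition num :: "nat \<Rightarrow> nat \<Rightarrow> bool \<Rightarrow> fop" where
  "num L j \<sigma> = op_mul L (cre L j \<sigma>) (ann L j \<sigma>)"

definition zop :: "nat \<Rightarrow> nat \<Rightarrow> bool \<Rightarrow> fop" where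
  "zop L j \<sigma> = op_add (op_smult 2 (num L j \<sigma>)) (op_smult (-1) op_id)"

definition op_eq :: "nat \<Rightarrow> fop \<Rightarrow> fop \<Rightarrow> bool" where
  "op_eq L A B \<longleftrightarrow> (\<forall>S'\<in>configs L. \<forall>S\<in>configs L. A S' S = B S' S)"

definition commutes :: "nat \<Rightarrow> fop \<Rightarrow> fop \<Rightarrow> bool" where
  "commutes L A B \<longleftrightarrow> op_eq L (op_mul L A B) (op_mul L B A)"

definition hubbard :: "nat \<Rightarrow> real \<Rightarrow> fop" where
  "hubbard L U = (\<lambda>S' S.
     (\<Sum>j<L. \<Sum>\<sigma>\<in>(UNIV::bool set).
        -2 * (op_mul L (cre L j \<sigma>) (ann L (j+1) \<sigma>) S' S
              + op_mul L (cre L (j+1) \<sigma>) (ann L j \<sigma>) S' S))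
   + (\<Sum>j<L. 4 * complex_of_real U *
        op_mul L (op_add (num L j True) (op_smult (-1/2) op_id))
                 (op_add (num L j False) (op_smult (-1/2) op_id)) S' S))"

datatype letter = LC | LCd | LZ | LI

definition letter_op :: "nat \<Rightarrow> letter \<Rightarrow> nat \<Rightarrow> bool \<Rightarrow> fop" where
  "letter_op L e j \<sigma> = (case e of LC \<Rightarrow> ann L j \<sigma> | LCd \<Rightarrow> cre L j \<sigma>
                                | LZ \<Rightarrow> zop L j \<sigma> | LI \<Rightarrow> op_id)"

definition op_prod :: "nat \<Rightarrow> fop list \<Rightarrow> fop" where
  "op_prod L xs = foldr (op_mul L) xs op_id"

text \<open>A word f describes the l-support element starting at site i:
  f p sigma is the letter e_{i+p,sigma}, for 0 <= p < l; f is I outside [0,l).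
  Basis element = (e_{i,up} ... e_{i+l-1,up}) (e_{i,down} ... e_{i+l-1,down}).\<close>
definition basis_elem :: "nat \<Rightarrow> nat \<Rightarrow> nat \<Rightarrow> (nat \<Rightarrow> bool \<Rightarrow> letter) \<Rightarrow> fop" where
  "basis_elem L l i f = op_prod L
      (map (\<lambda>p. letter_op L (f p True) (i + p) True) [0..<l]
       @ map (\<lambda>p. letter_op L (f p False) (i + p) False) [0..<l])"

definition basis_words :: "nat \<Rightarrow> (nat \<Rightarrow> bool \<Rightarrow> letter) set" where
  "basis_words l = {f. (\<forall>p \<sigma>. l \<le> p \<longrightarrow> f p \<sigma> = LI)
                       \<and> (f 0 True, f 0 False) \<noteq> (LI, LI)
                       \<and> (f (l - 1) True, f (l - 1) False) \<noteq> (LI, LI)}"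

definition local_op :: "nat \<Rightarrow> nat \<Rightarrow> (nat \<Rightarrow> nat \<Rightarrow> (nat \<Rightarrow> bool \<Rightarrow> letter) \<Rightarrow> complex) \<Rightarrow> fop" where
  "local_op L k coef = (\<lambda>S' S.
     \<Sum>l\<in>{1..k}. \<Sum>i<L. \<Sum>f\<in>basis_words l. coef l i f * basis_elem L l i f S' S)"

definition is_k_local_conserved :: "nat \<Rightarrow> real \<Rightarrow> nat \<Rightarrow> (nat \<Rightarrow> nat \<Rightarrow> (nat \<Rightarrow> bool \<Rightarrow> letter) \<Rightarrow> complex) \<Rightarrow> bool" where
  "is_k_local_conserved L U k coef \<longleftrightarrow>
     commutes L (local_op L k coef) (hubbard L U)
     \<and> (\<exists>i<L. \<exists>f\<in>basis_words k. coef k i f \<noteq> 0)"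

text \<open>The word of c^s_{i,sigma} c^s_{i+k-1,sigma}; s = True means c^dag.\<close>
definition end_word :: "nat \<Rightarrow> bool \<Rightarrow> bool \<Rightarrow> nat \<Rightarrow> bool \<Rightarrow> letter" where
  "end_word k \<sigma> s = (\<lambda>p \<tau>. if \<tau> = \<sigma> \<and> (p = 0 \<or> p = k - 1)
                              then (if s then LCd else LC) else LI)"

end

theory Submission
  imports Defs
begin

fun lapp :: "letter \<Rightarrow> mode \<Rightarrow> mode set \<Rightarrow> (mode set \<times> complex) option" where
  "lapp LC m S = (if m \<in> S then Some (S - {m}, jw_sign S m) else None)"
| "lapp LCd m S = (if m \<notin> S then Some (insert m S, jw_sign S m) else None)"
| "lapp LZ m S = Some (S, if m \<in> S then 1 else -1)"
| "lapp LI m S = Some (S, 1)"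

definition ent :: "(mode set \<times> complex) option \<Rightarrow> mode set \<Rightarrow> complex" where
  "ent r S' = (case r of None \<Rightarrow> 0 | Some (T, s) \<Rightarrow> if S' = T then s else 0)"

lemma jw_sign_insert_self: "jw_sign (insert m S) m = jw_sign S m"
proof -
  have "{m' \<in> insert m S. mode_rank m' < mode_rank m} = {m' \<in> S. mode_rank m' < mode_rank m}"
    by auto
  then show ?thesis unfolding jw_sign_def by simp
qed

lemma jw_sign_sq: "jw_sign S m * jw_sign S m = 1"
  unfolding jw_sign_def by (simp add: power_mult_distrib[symmetric])

lemma jw_sign_pm: "jw_sign S m = 1 \<or> jw_sign S m = -1"
  unfolding jw_sign_def by (cases "even (card {m' \<in> S. mode_rank m' < mode_rank m})") auto

lemma configs_finite: "finite (configs L)"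
  unfolding configs_def modes_def by simp

lemma op_mul_single:
  assumes "T \<in> configs L" "\<And>R. B R S = (if R = T then s else 0)"
  shows "op_mul L A B S' S = A S' T * s"
proof -
  have "op_mul L A B S' S = (\<Sum>R\<in>configs L. (if R = T then A S' T * s else 0))"
    unfolding op_mul_def by (rule sum.cong) (auto simp: assms(2))
  also have "\<dots> = A S' T * s" using assms(1) configs_finite by simp
  finally show ?thesis .
qed

lemma op_mul_zero:
  assumes "\<And>R. B R S = 0"
  shows "op_mul L A B S' S = 0"
  unfolding op_mul_def by (simp add: assms)

lemma op_mul_ent:
  assumes "\<And>R. B R S = ent r R"
    and "\<And>T s. r = Some (T, s) \<Longrightarrow> T \<in> configs L"
  shows "op_mul L A B S' S = (case r of None \<Rightarrow> 0 | Some (T, s) \<Rightarrow> A S' T * s)"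
proof (cases r)
  case None
  then show ?thesis using assms by (simp add: op_mul_zero ent_def)
next
  case (Some p)
  obtain T s where p: "p = (T, s)" by (cases p)
  have "op_mul L A B S' S = A S' T * s"
    by (rule op_mul_single[of T]) (use assms Some p in \<open>auto simp: ent_def\<close>)
  then show ?thesis using Some p by simp
qed

lemma mode_in_modes: "0 < L \<Longrightarrow> (j mod L, \<sigma>) \<in> modes L"
  unfolding modes_def by simp

lemma lapp_configs:
  assumes "S \<in> configs L" "m \<in> modes L" "lapp e m S = Some (T, s)"
  shows "T \<in> configs L"
  using assms by (cases e) (auto simp: configs_def split: if_splits)

lemma num_ent:
  assumes "0 < L" "S \<in> configs L"
  shows "num L j \<sigma> S' S = (if S' = S \<and> (j mod L, \<sigma>) \<in> S then 1 else 0)"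
proof -
  let ?m = "(j mod L, \<sigma>)"
  show ?thesis
  proof (cases "?m \<in> S")
    case True
    have "num L j \<sigma> S' S = cre L j \<sigma> S' (S - {?m}) * jw_sign S ?m"
      unfolding num_def
      by (rule op_mul_single) (use assms True in \<open>auto simp: ann_def configs_def Let_def\<close>)
    also have "\<dots> = (if S' = S then 1 else 0)"
      using True by (auto simp: cre_def ann_def Let_def jw_sign_sq) 
    finally show ?thesis using True by simp
  next
    case False
    have "num L j \<sigma> S' S = 0" unfolding num_def
      by (rule op_mul_zero) (use False in \<open>auto simp: ann_def Let_def\<close>)
    then show ?thesis using False by simp
  qed
qed

lemma letter_ent:
  assumes "0 < L" "S \<in> configs L"
  shows "letter_op L e j \<sigma> S' S = ent (lapp e (j mod L, \<sigma>) S) S'"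
proof (cases e)
  case LC
  then show ?thesis by (auto simp: letter_op_def ann_def ent_def Let_def)
next
  case LCd
  then show ?thesis
    by (auto simp: letter_op_def cre_def ann_def ent_def Let_def jw_sign_insert_self)
next
  case LZ
  then show ?thesis using num_ent[OF assms]
    by (auto simp: letter_op_def zop_def op_add_def op_smult_def op_id_def ent_def)
next
  case LI
  then show ?thesis by (auto simp: letter_op_def op_id_def ent_def)
qed

fun lapps :: "(letter \<times> mode) list \<Rightarrow> mode set \<Rightarrow> (mode set \<times> complex) option" where
  "lapps [] S = Some (S, 1)"
| "lapps ((e, m) # xs) S = (case lapps xs S of None \<Rightarrow> None
     | Some (T, s) \<Rightarrow> (case lapp e m T of None \<Rightarrow> None | Some (T', s') \<Rightarrow> Some (T', s' * s)))"

lemma lapps_configs: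
  assumes "S \<in> configs L" "snd ` set xs \<subseteq> modes L" "lapps xs S = Some (T, s)"
  shows "T \<in> configs L"
  using assms
proof (induction xs arbitrary: T s)
  case Nil
  then show ?case by simp
next
  case (Cons x xs)
  obtain e m where x: "x = (e, m)" by (cases x)
  from Cons.prems x obtain T0 s0 s' where t0: "lapps xs S = Some (T0, s0)"
    and l: "lapp e m T0 = Some (T, s')"
    by (auto split: option.splits)
  have "T0 \<in> configs L" using Cons t0 by auto
  then show ?case using lapp_configs[OF _ _ l] Cons.prems(2) x by auto
qed

definition tomode :: "nat \<Rightarrow> letter \<times> nat \<times> bool \<Rightarrow> letter \<times> mode" where
  "tomode L x = (case x of (e, j, \<sigma>) \<Rightarrow> (e, (j mod L, \<sigma>)))"

lemma op_prod_ent: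
  assumes "0 < L" "S \<in> configs L"
  shows "op_prod L (map (\<lambda>(e, j, \<sigma>). letter_op L e j \<sigma>) ys) S' S
         = ent (lapps (map (tomode L) ys) S) S'"
  using assms(2)
proof (induction ys arbitrary: S')
  case Nil
  then show ?case by (simp add: op_prod_def op_id_def ent_def)
next
  case (Cons y ys)
  obtain e j \<sigma> where y: "y = (e, j, \<sigma>)" by (cases y)
  have sm: "snd ` set (map (tomode L) ys) \<subseteq> modes L"
    using assms(1) by (auto simp: tomode_def modes_def split: prod.splits)
  have "op_prod L (map (\<lambda>(e, j, \<sigma>). letter_op L e j \<sigma>) (y # ys)) S' S
      = op_mul L (letter_op L e j \<sigma>) (op_prod L (map (\<lambda>(e, j, \<sigma>). letter_op L e j \<sigma>) ys)) S' S"
    by (simp add: op_prod_def y)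
  also have "\<dots> = (case lapps (map (tomode L) ys) S of None \<Rightarrow> 0
                   | Some (T, s) \<Rightarrow> letter_op L e j \<sigma> S' T * s)"
    by (rule op_mul_ent) (use Cons lapps_configs[OF Cons.prems sm] in auto)
  also have "\<dots> = ent (lapps (map (tomode L) (y # ys)) S) S'"
  proof (cases "lapps (map (tomode L) ys) S")
    case None
    then show ?thesis by (simp add: y tomode_def ent_def)
  next
    case (Some p)
    obtain T s where p: "p = (T, s)" by (cases p)
    have T: "T \<in> configs L" using lapps_configs[OF Cons.prems sm] Some p by simp
    show ?thesis using Some p letter_ent[OF assms(1) T]
      by (auto simp: y tomode_def ent_def split: option.splits)
  qed
  finally show ?case .
qed

lemma lapps_untouched:
  assumes "lapps xs S = Some (T, s)" "m \<notin> snd ` set xs"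
  shows "m \<in> T \<longleftrightarrow> m \<in> S"
  using assms
proof (induction xs arbitrary: T s)
  case Nil
  then show ?case by simp
next
  case (Cons x xs)
  obtain e m0 where x: "x = (e, m0)" by (cases x)
  from Cons.prems x obtain T0 s0 s' where t0: "lapps xs S = Some (T0, s0)"
    and l: "lapp e m0 T0 = Some (T, s')"
    by (auto split: option.splits)
  have "m \<in> T0 \<longleftrightarrow> m \<in> S" using Cons t0 x by auto
  moreover have "m \<noteq> m0" using Cons.prems x by auto
  ultimately show ?case using l by (cases e) (auto split: if_splits)
qed

lemma lapps_sign:
  assumes "lapps xs S = Some (T, s)"
  shows "s = 1 \<or> s = -1"
  using assms
proof (induction xs arbitrary: T s)
  case Nil
  then show ?case by simp
next
  case (Cons x xs)
  obtain e m0 where x: "x = (e, m0)" by (cases x)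
  from Cons.prems x obtain T0 s0 s' where t0: "lapps xs S = Some (T0, s0)"
    and l: "lapp e m0 T0 = Some (T, s')" and s: "s = s' * s0"
    by (auto split: option.splits)
  have "s0 = 1 \<or> s0 = -1" using Cons t0 by auto
  moreover have "s' = 1 \<or> s' = -1" using l jw_sign_pm[of T0 m0]
    by (cases e) (auto split: if_splits)
  ultimately show ?case using s by auto
qed

lemma lapps_letters:
  assumes "distinct (map snd xs)" "lapps xs S = Some (T, s)" "(e, m) \<in> set xs"
  shows "(e = LC \<longrightarrow> m \<in> S \<and> m \<notin> T) \<and> (e = LCd \<longrightarrow> m \<notin> S \<and> m \<in> T)
         \<and> (e = LZ \<or> e = LI \<longrightarrow> (m \<in> T \<longleftrightarrow> m \<in> S))"
  using assms
proof (induction xs arbitrary: T s)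
  case Nil
  then show ?case by simp
next
  case (Cons x xs)
  obtain e0 m0 where x: "x = (e0, m0)" by (cases x)
  from Cons.prems x obtain T0 s0 s' where t0: "lapps xs S = Some (T0, s0)"
    and l: "lapp e0 m0 T0 = Some (T, s')"
    by (auto split: option.splits)
  have nm: "m0 \<notin> snd ` set xs" using Cons.prems(1) x by auto
  have u0: "m0 \<in> T0 \<longleftrightarrow> m0 \<in> S" using lapps_untouched[OF t0 nm] .
  show ?case
  proof (cases "(e, m) = x")
    case True
    then show ?thesis using l u0 x by (cases e) (auto split: if_splits)
  next
    case False
    then have inx: "(e, m) \<in> set xs" using Cons.prems(3) by auto
    have ih: "(e = LC \<longrightarrow> m \<in> S \<and> m \<notin> T0) \<and> (e = LCd \<longrightarrow> m \<notin> S \<and> m \<in> T0)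
         \<and> (e = LZ \<or> e = LI \<longrightarrow> (m \<in> T0 \<longleftrightarrow> m \<in> S))"
      using Cons.IH[OF _ t0 inx] Cons.prems(1) by auto
    have "m \<noteq> m0" using inx nm by force
    then have "m \<in> T \<longleftrightarrow> m \<in> T0" using l by (cases e0) (auto split: if_splits)
    then show ?thesis using ih by auto
  qed
qed

definition zv :: "mode \<Rightarrow> mode set \<Rightarrow> complex" where
  "zv m S = (if m \<in> S then 1 else -1)"

lemma lapps_ZI:
  assumes "list_all2 (\<lambda>x y. snd y = snd x \<and> (fst y = fst x \<or> (fst x = LI \<and> fst y = LZ))) xs ys"
    and "distinct (map snd xs)" and "\<forall>x\<in>set xs. fst x \<noteq> LZ"
  shows "lapps ys S = map_option (\<lambda>(T, s). (T, s * (\<Prod>m\<in>{m. (LZ, m) \<in> set ys}. zv m S))) (lapps xs S)"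
  using assms
proof (induction xs arbitrary: ys)
  case Nil
  then show ?case by simp
next
  case (Cons x xs)
  from Cons.prems(1) obtain y ys' where ys: "ys = y # ys'"
    and rel: "snd y = snd x \<and> (fst y = fst x \<or> (fst x = LI \<and> fst y = LZ))"
    and rest: "list_all2 (\<lambda>x y. snd y = snd x \<and> (fst y = fst x \<or> (fst x = LI \<and> fst y = LZ))) xs ys'"
    by (cases ys) auto
  obtain e m where x: "x = (e, m)" by (cases x)
  obtain e' where y: "y = (e', m)" using rel x by (cases y) auto
  have ih: "lapps ys' S = map_option (\<lambda>(T, s). (T, s * (\<Prod>m\<in>{m. (LZ, m) \<in> set ys'}. zv m S))) (lapps xs S)"
    using Cons.IH[OF rest] Cons.prems by auto
  have sndeq: "map snd ys' = map snd xs" using rest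
    by (induction rule: list_all2_induct) auto
  have nm: "m \<notin> snd ` set xs" using Cons.prems(2) x by auto
  have nm': "(LZ, m) \<notin> set ys'"
  proof
    assume "(LZ, m) \<in> set ys'"
    then have "m \<in> snd ` set ys'" by force
    then have "m \<in> set (map snd ys')" by simp
    then show False using nm sndeq by simp
  qed
  show ?case
  proof (cases "lapps xs S")
    case None
    then show ?thesis using ih ys x y by simp
  next
    case (Some p)
    obtain T s where p: "p = (T, s)" by (cases p)
    have ys'v: "lapps ys' S = Some (T, s * (\<Prod>m\<in>{m. (LZ, m) \<in> set ys'}. zv m S))"
      using ih Some p by simp
    have uT: "m \<in> T \<longleftrightarrow> m \<in> S" using lapps_untouched[OF _ nm] Some p by simp
    have fin: "finite {m. (LZ, m) \<in> set ys'}"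
    proof -
      have "{m. (LZ, m) \<in> set ys'} \<subseteq> snd ` set ys'" by force
      then show ?thesis by (rule finite_subset) simp
    qed
    show ?thesis
    proof (cases "e' = e")
      case True
      have "e \<noteq> LZ" using Cons.prems(3) x by auto
      then have "{m. (LZ, m) \<in> set ys} = {m. (LZ, m) \<in> set ys'}" using ys y True by auto
      then show ?thesis using ys'v ys y x True Some p
        by (auto split: option.splits simp: mult.assoc)
    next
      case False
      then have ee: "e = LI" "e' = LZ" using rel x y by auto
      have zs: "{m'. (LZ, m') \<in> set ys} = insert m {m. (LZ, m) \<in> set ys'}" using ys y ee by auto
      have "(\<Prod>m'\<in>{m'. (LZ, m') \<in> set ys}. zv m' S) = zv m S * (\<Prod>m\<in>{m. (LZ, m) \<in> set ys'}. zv m S)"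
        unfolding zs using fin nm' by simp
      then show ?thesis using ys'v ys y x ee Some p uT
        by (auto simp: zv_def mult_ac)
    qed
  qed
qed

lemma lapps_exists:
  assumes "distinct (map snd xs)"
    and "\<forall>(e, m)\<in>set xs. (e = LC \<longrightarrow> m \<in> S) \<and> (e = LCd \<longrightarrow> m \<notin> S)"
  shows "\<exists>s. lapps xs S = Some ((S - {m. (LC, m) \<in> set xs}) \<union> {m. (LCd, m) \<in> set xs}, s)"
  using assms
proof (induction xs)
  case Nil
  then show ?case by simp
next
  case (Cons x xs)
  obtain e m where x: "x = (e, m)" by (cases x)
  obtain s0 where t0: "lapps xs S = Some ((S - {m. (LC, m) \<in> set xs}) \<union> {m. (LCd, m) \<in> set xs}, s0)"
    using Cons by auto
  let ?T0 = "(S - {m. (LC, m) \<in> set xs}) \<union> {m. (LCd, m) \<in> set xs}"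
  have nm: "m \<notin> snd ` set xs" using Cons.prems(1) x by auto
  have u: "m \<in> ?T0 \<longleftrightarrow> m \<in> S" using nm by force
  show ?case
  proof (cases e)
    case LC
    then have "m \<in> S" using Cons.prems(2) x by auto
    then have "m \<in> ?T0" using u by simp
    moreover have "?T0 - {m} = (S - {m'. (LC, m') \<in> set (x # xs)}) \<union> {m'. (LCd, m') \<in> set (x # xs)}"
      using x LC nm by force
    ultimately show ?thesis using t0 x LC by auto
  next
    case LCd
    then have "m \<notin> S" using Cons.prems(2) x by auto
    then have "m \<notin> ?T0" using u by simp
    moreover have "insert m ?T0 = (S - {m'. (LC, m') \<in> set (x # xs)}) \<union> {m'. (LCd, m') \<in> set (x # xs)}"
      using x LCd nm by force
    ultimately show ?thesis using t0 x LCd by auto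
  next
    case LZ
    then show ?thesis using t0 x by auto
  next
    case LI
    then show ?thesis using t0 x by auto
  qed
qed

definition wl :: "nat \<Rightarrow> nat \<Rightarrow> nat \<Rightarrow> (nat \<Rightarrow> bool \<Rightarrow> letter) \<Rightarrow> (letter \<times> mode) list" where
  "wl L l i f = map (\<lambda>p. (f p True, ((i + p) mod L, True))) [0..<l]
              @ map (\<lambda>p. (f p False, ((i + p) mod L, False))) [0..<l]"

definition win :: "nat \<Rightarrow> nat \<Rightarrow> nat \<Rightarrow> mode set" where
  "win L l i = {((i + p) mod L, \<tau>) | p \<tau>. p < l}"

lemma be_ent:
  assumes "0 < L" "S \<in> configs L"
  shows "basis_elem L l i f S' S = ent (lapps (wl L l i f) S) S'"
proof -
  define ys where "ys = map (\<lambda>p. (f p True, i + p, True)) [0..<l] @ map (\<lambda>p. (f p False, i + p, False)) [0..<l]"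
  have "basis_elem L l i f = op_prod L (map (\<lambda>(e, j, \<sigma>). letter_op L e j \<sigma>) ys)"
    unfolding basis_elem_def ys_def by (simp add: o_def)
  moreover have "map (tomode L) ys = wl L l i f"
    by (simp add: ys_def wl_def tomode_def o_def)
  moreover have "op_prod L (map (\<lambda>(e, j, \<sigma>). letter_op L e j \<sigma>) ys) S' S = ent (lapps (map (tomode L) ys) S) S'"
    by (rule op_prod_ent[OF assms])
  ultimately show ?thesis by simp
qed

lemma wl_set: "(e, m) \<in> set (wl L l i f) \<longleftrightarrow> (\<exists>p \<tau>. p < l \<and> m = ((i + p) mod L, \<tau>) \<and> e = f p \<tau>)"
  unfolding wl_def by (cases "snd m") auto

lemma wl_modes: "snd ` set (wl L l i f) = win L l i"
proof
  show "snd ` set (wl L l i f) \<subseteq> win L l i"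
  proof
    fix m assume "m \<in> snd ` set (wl L l i f)"
    then obtain e where "(e, m) \<in> set (wl L l i f)" by force
    then obtain p \<tau> where "p < l" "m = ((i + p) mod L, \<tau>)" using wl_set by blast
    then show "m \<in> win L l i" unfolding win_def by blast
  qed
next
  show "win L l i \<subseteq> snd ` set (wl L l i f)"
  proof
    fix m assume "m \<in> win L l i"
    then obtain p \<tau> where p: "p < l" "m = ((i + p) mod L, \<tau>)" unfolding win_def by auto
    have "(f p \<tau>, m) \<in> set (wl L l i f)" using p unfolding wl_def by (cases \<tau>) auto
    then show "m \<in> snd ` set (wl L l i f)" by force
  qed
qed

lemma mod_cong_int:
  assumes "(x::nat) mod L = y mod L"
  shows "int L dvd int x - int y"
proof -
  have "int x mod int L = int y mod int L" using assms by (metis of_nat_mod)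
  then show ?thesis using mod_eq_dvd_iff by blast
qed

lemma wl_distinct:
  assumes "l \<le> L"
  shows "distinct (map snd (wl L l i f))"
proof -
  have inj: "inj_on (\<lambda>p. (i + p) mod L) {0..<l}"
  proof (rule inj_onI)
    fix p q assume "p \<in> {0..<l}" "q \<in> {0..<l}" "(i + p) mod L = (i + q) mod L"
    then have d: "int L dvd int (i + p) - int (i + q)" using mod_cong_int by blast
    have "int (i + p) - int (i + q) = int p - int q" by simp
    then have d2: "int L dvd int p - int q" using d by simp
    have "\<bar>int p - int q\<bar> < int L" using \<open>p \<in> {0..<l}\<close> \<open>q \<in> {0..<l}\<close> assms by auto
    then have "int p - int q = 0" using d2 dvd_imp_le_int[of "int p - int q" "int L"] by fastforce
    then show "p = q" by simp
  qed
  have d1: "distinct (map (\<lambda>p. ((i + p) mod L, b)) [0..<l])" for b :: bool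
    using inj by (simp add: distinct_map inj_on_def)
  show ?thesis unfolding wl_def using d1[of True] d1[of False] by (auto simp: o_def)
qed

lemma lapps_wl_support:
  assumes "lapps (wl L l i f) S = Some (T, s)" "(m \<in> T) \<noteq> (m \<in> S)"
  shows "m \<in> win L l i"
  using lapps_untouched[OF assms(1)] assms(2) wl_modes by blast

definition coverable :: "nat \<Rightarrow> nat \<Rightarrow> mode set \<Rightarrow> bool" where
  "coverable L k D \<longleftrightarrow> (\<exists>l i. 1 \<le> l \<and> l \<le> k \<and> i < L \<and> D \<subseteq> win L l i)"

definition SP :: "nat \<Rightarrow> nat \<Rightarrow> fop \<Rightarrow> bool" where
  "SP L k G \<longleftrightarrow> (\<forall>S' S. S' \<in> configs L \<longrightarrow> S \<in> configs L \<longrightarrow> G S' S \<noteq> 0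
      \<longrightarrow> coverable L k {m. (m \<in> S') \<noteq> (m \<in> S)})"

lemma local_op_SP:
  assumes "0 < L"
  shows "SP L k (local_op L k coef)"
  unfolding SP_def
proof (intro allI impI)
  fix S' S assume S': "S' \<in> configs L" and S: "S \<in> configs L" and ne: "local_op L k coef S' S \<noteq> 0"
  then obtain l where l: "l \<in> {1..k}"
    and ne1: "(\<Sum>i<L. \<Sum>f\<in>basis_words l. coef l i f * basis_elem L l i f S' S) \<noteq> 0"
    unfolding local_op_def by (meson sum.not_neutral_contains_not_neutral)
  then obtain i where i: "i < L"
    and ne2: "(\<Sum>f\<in>basis_words l. coef l i f * basis_elem L l i f S' S) \<noteq> 0"
    by (meson lessThan_iff sum.not_neutral_contains_not_neutral)
  then obtain f where ne3: "basis_elem L l i f S' S \<noteq> 0"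
    by (metis (no_types, lifting) mult_zero_right sum.neutral)
  then obtain s where ls: "lapps (wl L l i f) S = Some (S', s)"
    using be_ent[OF assms S] by (auto simp: ent_def split: option.splits if_splits)
  have "{m. (m \<in> S') \<noteq> (m \<in> S)} \<subseteq> win L l i"
    using lapps_wl_support[OF ls] by blast
  then show "coverable L k {m. (m \<in> S') \<noteq> (m \<in> S)}"
    unfolding coverable_def using l i by auto
qed

lemma win_two:
  assumes "((a + d1) mod L, \<sigma>) \<in> win L l i" "((a + d2) mod L, \<sigma>') \<in> win L l i"
  obtains p q where "p < l" "q < l" "int L dvd (int q - int p) - (int d2 - int d1)"
    "(i + p) mod L = (a + d1) mod L" "(i + q) mod L = (a + d2) mod L"
proof -
  from assms(1) obtain p where p: "p < l" "(i + p) mod L = (a + d1) mod L"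
    unfolding win_def by auto
  from assms(2) obtain q where q: "q < l" "(i + q) mod L = (a + d2) mod L"
    unfolding win_def by auto
  have "int L dvd int (i + p) - int (a + d1)" using mod_cong_int[OF p(2)] .
  moreover have "int L dvd int (i + q) - int (a + d2)" using mod_cong_int[OF q(2)] .
  ultimately have "int L dvd (int (i + q) - int (a + d2)) - (int (i + p) - int (a + d1))"
    by (rule dvd_diff[rotated])
  then have "int L dvd (int q - int p) - (int d2 - int d1)"
    by (simp add: algebra_simps)
  then show ?thesis using that p q by blast
qed

lemma not_cover_far:
  assumes "l \<le> k" "d1 \<le> d2" "k \<le> d2 - d1" "d2 - d1 + k \<le> L"
  shows "\<not> (((a + d1) mod L, \<sigma>) \<in> win L l i \<and> ((a + d2) mod L, \<sigma>') \<in> win L l i)"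
proof
  assume "((a + d1) mod L, \<sigma>) \<in> win L l i \<and> ((a + d2) mod L, \<sigma>') \<in> win L l i"
  then obtain p q where pq: "p < l" "q < l" "int L dvd (int q - int p) - (int d2 - int d1)"
    using win_two by blast
  define z where "z = (int d2 - int d1) - (int q - int p)"
  have "int L dvd z" using pq(3) unfolding z_def by (metis dvd_minus_iff minus_diff_eq)
  moreover have "0 < z" "z < int L" using pq assms unfolding z_def by linarith+
  ultimately show False using zdvd_not_zless by blast
qed

lemma cover_ends:
  assumes "a < L" "i < L" "l \<le> k" "1 \<le> k" "2 * k \<le> L"
    and "(a, \<sigma>) \<in> win L l i" "((a + (k - 1)) mod L, \<sigma>') \<in> win L l i"
  shows "l = k \<and> i = a"
proof -
  have a: "((a + 0) mod L, \<sigma>) \<in> win L l i" using assms by simp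
  obtain p q where pq: "p < l" "q < l" "int L dvd (int q - int p) - (int (k - 1) - int 0)"
    "(i + p) mod L = (a + 0) mod L"
    using win_two[OF a assms(7)] by blast
  define z where "z = int (k - 1) - (int q - int p)"
  have dz: "int L dvd z" using pq(3) unfolding z_def by (metis dvd_minus_iff minus_diff_eq diff_zero of_nat_0)
  have z0: "0 \<le> z" "z < int L" using pq assms unfolding z_def by linarith+
  have "z = 0"
  proof (rule ccontr)
    assume "z \<noteq> 0"
    then have "0 < z" using z0 by simp
    then show False using zdvd_not_zless z0 dz by blast
  qed
  then have "q = k - 1 + p" unfolding z_def by linarith
  then have "p = 0" "l = k" using pq assms by linarith+
  moreover have "i = a" using pq(4) \<open>p = 0\<close> assms(1,2) by simp
  ultimately show ?thesis by simp
qed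

definition h1 :: "nat \<Rightarrow> nat \<Rightarrow> bool \<Rightarrow> fop" where
  "h1 L j \<sigma> = op_mul L (cre L j \<sigma>) (ann L (j + 1) \<sigma>)"
definition h2 :: "nat \<Rightarrow> nat \<Rightarrow> bool \<Rightarrow> fop" where
  "h2 L j \<sigma> = op_mul L (cre L (j + 1) \<sigma>) (ann L j \<sigma>)"
definition ud :: "nat \<Rightarrow> nat \<Rightarrow> fop" where
  "ud L j = op_mul L (op_add (num L j True) (op_smult (-1/2) op_id))
                 (op_add (num L j False) (op_smult (-1/2) op_id))"

lemma hubbard_eq: "hubbard L U S' S = (\<Sum>j<L. \<Sum>\<sigma>\<in>(UNIV::bool set). -2 * (h1 L j \<sigma> S' S + h2 L j \<sigma> S' S))
   + (\<Sum>j<L. 4 * complex_of_real U * ud L j S' S)"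
  unfolding hubbard_def h1_def h2_def ud_def by simp

lemma h_ent:
  assumes "0 < L" "S \<in> configs L"
  shows "op_mul L (cre L j \<sigma>) (ann L j' \<sigma>') S' S
       = ent (lapps [(LCd, (j mod L, \<sigma>)), (LC, (j' mod L, \<sigma>'))] S) S'"
proof -
  have "op_mul L (cre L j \<sigma>) (ann L j' \<sigma>') S' S
      = (case lapps [(LC, (j' mod L, \<sigma>'))] S of None \<Rightarrow> 0 | Some (T, s) \<Rightarrow> cre L j \<sigma> S' T * s)"
  proof (rule op_mul_ent)
    fix R show "ann L j' \<sigma>' R S = ent (lapps [(LC, (j' mod L, \<sigma>'))] S) R"
      by (auto simp: ann_def ent_def Let_def)
  next
    fix T s assume "lapps [(LC, (j' mod L, \<sigma>'))] S = Some (T, s)"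
    then show "T \<in> configs L" using assms by (auto simp: configs_def split: if_splits)
  qed
  also have "\<dots> = ent (lapps [(LCd, (j mod L, \<sigma>)), (LC, (j' mod L, \<sigma>'))] S) S'"
  proof (cases "(j' mod L, \<sigma>') \<in> S")
    case True
    have T: "S - {(j' mod L, \<sigma>')} \<in> configs L" using assms by (auto simp: configs_def)
    show ?thesis using True letter_ent[OF assms(1) T, of LCd j \<sigma> S']
      by (auto simp: letter_op_def ent_def split: option.splits)
  next
    case False
    then show ?thesis by (simp add: ent_def)
  qed
  finally show ?thesis .
qed

lemma ud_ent:
  assumes "0 < L" "S \<in> configs L"
  shows "ud L j S' S = (if S' = S then ((if (j mod L, True) \<in> S then 1 else 0) - 1/2)
                                    * ((if (j mod L, False) \<in> S then 1 else 0) - 1/2) else 0)"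
proof -
  let ?nT = "(if (j mod L, True) \<in> S then 1 else 0) :: complex"
  let ?nF = "(if (j mod L, False) \<in> S then 1 else 0) :: complex"
  have "ud L j S' S = op_add (num L j True) (op_smult (-1/2) op_id) S' S * (?nF - 1/2)"
    unfolding ud_def
    by (rule op_mul_single[OF assms(2)])
       (auto simp: op_add_def op_smult_def op_id_def num_ent[OF assms])
  then show ?thesis by (auto simp: op_add_def op_smult_def op_id_def num_ent[OF assms])
qed

definition adjm :: "nat \<Rightarrow> mode \<Rightarrow> mode \<Rightarrow> bool" where
  "adjm L m m' \<longleftrightarrow> snd m = snd m' \<and> fst m < L \<and> fst m' < L
       \<and> (fst m' = (fst m + 1) mod L \<or> fst m = (fst m' + 1) mod L)"

lemma insert_diff_eq:
  assumes "insert a (S - {b}) = insert c (S - {d})" "b \<in> S" "d \<in> S" "a \<notin> S" "c \<notin> S"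
  shows "a = c \<and> b = d"
proof -
  have "a \<in> insert c (S - {d})" using assms(1) by blast
  then have ac: "a = c" using assms(4) by auto
  have "b \<notin> insert a (S - {b})" using assms(2,4) by auto
  then have "b \<notin> insert c (S - {d})" using assms(1) by simp
  then have "b = d" using assms(2) by auto
  then show ?thesis using ac by simp
qed

lemma h1_val:
  assumes "0 < L" "S \<in> configs L" "j < L"
  shows "h1 L j \<sigma> T S = (if ((j + 1) mod L, \<sigma>) \<in> S \<and> (j, \<sigma>) \<notin> S - {((j + 1) mod L, \<sigma>)}
      \<and> T = insert (j, \<sigma>) (S - {((j + 1) mod L, \<sigma>)})
      then jw_sign (S - {((j + 1) mod L, \<sigma>)}) (j, \<sigma>) * jw_sign S ((j + 1) mod L, \<sigma>) else 0)"
  unfolding h1_def h_ent[OF assms(1,2)] using assms(3) by (auto simp: ent_def)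

lemma h2_val:
  assumes "0 < L" "S \<in> configs L" "j < L"
  shows "h2 L j \<sigma> T S = (if (j, \<sigma>) \<in> S \<and> ((j + 1) mod L, \<sigma>) \<notin> S - {(j, \<sigma>)}
      \<and> T = insert ((j + 1) mod L, \<sigma>) (S - {(j, \<sigma>)})
      then jw_sign (S - {(j, \<sigma>)}) ((j + 1) mod L, \<sigma>) * jw_sign S (j, \<sigma>) else 0)"
  unfolding h2_def h_ent[OF assms(1,2)] using assms(3) by (auto simp: ent_def)

lemma mod_succ_ne: assumes "2 < L" "(x::nat) < L" shows "(x + 1) mod L \<noteq> x"
proof (cases "x + 1 < L")
  case True
  then show ?thesis by simp
next
  case False
  then have "x + 1 = L" using assms by simp
  then show ?thesis using assms by simp
qed

lemma mod_succ2_ne: "2 < L \<Longrightarrow> (x::nat) < L \<Longrightarrow> ((x + 1) mod L + 1) mod L \<noteq> x"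
proof
  assume L: "2 < L" and x: "x < L" and e: "((x + 1) mod L + 1) mod L = x"
  have "((x + 1) mod L + 1) mod L = (x + 2) mod L" by (simp add: mod_Suc_eq)
  then have "(x + 2) mod L = x mod L" using e x by simp
  then have "int L dvd int (x + 2) - int x" using mod_cong_int by blast
  then have "int L dvd 2" by simp
  then show False using L zdvd_not_zless[of 2 "int L"] by simp
qed

lemma hop_val:
  assumes L: "2 < L" and S: "S \<in> configs L" and m: "m \<in> S" and m': "m' \<notin> S" and adj: "adjm L m m'"
  shows "hubbard L U (insert m' (S - {m})) S = -2 * (jw_sign (S - {m}) m' * jw_sign S m)"
proof -
  let ?T = "insert m' (S - {m})"
  have L0: "0 < L" using L by simp
  have TS: "?T \<noteq> S" using m' by auto
  have ud0: "ud L j ?T S = 0" for j using ud_ent[OF L0 S] TS by simp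
  obtain x \<tau> where mx: "m = (x, \<tau>)" by (cases m)
  obtain x' where mx': "m' = (x', \<tau>)" using adj mx unfolding adjm_def by (cases m') auto
  have x: "x < L" "x' < L" using adj mx mx' unfolding adjm_def by auto
  let ?v = "jw_sign (S - {m}) m' * jw_sign S m"
  have key: "(\<Sum>\<sigma>\<in>(UNIV::bool set). -2 * (h1 L j \<sigma> ?T S + h2 L j \<sigma> ?T S))
      = (if (x' = (x + 1) mod L \<and> j = x) \<or> (x = (x' + 1) mod L \<and> j = x') then -2 * ?v else 0)"
    if j: "j < L" for j
  proof -
    have h1z: "h1 L j \<sigma> ?T S = (if x = (x' + 1) mod L \<and> j = x' \<and> \<sigma> = \<tau> then ?v else 0)" for \<sigma>
    proof (cases "((j + 1) mod L, \<sigma>) \<in> S \<and> (j, \<sigma>) \<notin> S - {((j + 1) mod L, \<sigma>)}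
      \<and> ?T = insert (j, \<sigma>) (S - {((j + 1) mod L, \<sigma>)})")
      case True
      have ne: "(j, \<sigma>) \<noteq> ((j + 1) mod L, \<sigma>)" using mod_succ_ne[OF L j] by auto
      then have "(j, \<sigma>) \<notin> S" using True by auto
      then have "m' = (j, \<sigma>) \<and> m = ((j + 1) mod L, \<sigma>)"
        using insert_diff_eq[of m' S m "(j, \<sigma>)" "((j + 1) mod L, \<sigma>)"] True m m' by auto
      then have e: "m' = (j, \<sigma>)" "m = ((j + 1) mod L, \<sigma>)" by auto
      then have c: "x = (x' + 1) mod L \<and> j = x' \<and> \<sigma> = \<tau>" using mx mx' by auto
      have "h1 L j \<sigma> ?T S = jw_sign (S - {((j + 1) mod L, \<sigma>)}) (j, \<sigma>) * jw_sign S ((j + 1) mod L, \<sigma>)"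
        by (subst h1_val[OF L0 S j]) (rule if_P[OF True])
      then show ?thesis using c e by (simp only: if_P)
    next
      case False
      have nc: "\<not> (x = (x' + 1) mod L \<and> j = x' \<and> \<sigma> = \<tau>)"
      proof
        assume "x = (x' + 1) mod L \<and> j = x' \<and> \<sigma> = \<tau>"
        then have e: "((j + 1) mod L, \<sigma>) = m" "(j, \<sigma>) = m'" using mx mx' by auto
        show False using False m m' unfolding e by auto
      qed
      have "h1 L j \<sigma> ?T S = 0"
        by (subst h1_val[OF L0 S j]) (rule if_not_P[OF False])
      then show ?thesis by (simp only: if_not_P[OF nc])
    qed
    have h2z: "h2 L j \<sigma> ?T S = (if x' = (x + 1) mod L \<and> j = x \<and> \<sigma> = \<tau> then ?v else 0)" for \<sigma>
    proof (cases "(j, \<sigma>) \<in> S \<and> ((j + 1) mod L, \<sigma>) \<notin> S - {(j, \<sigma>)}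
      \<and> ?T = insert ((j + 1) mod L, \<sigma>) (S - {(j, \<sigma>)})")
      case True
      have ne: "(j, \<sigma>) \<noteq> ((j + 1) mod L, \<sigma>)" using mod_succ_ne[OF L j] by auto
      then have "((j + 1) mod L, \<sigma>) \<notin> S" using True by auto
      then have "m' = ((j + 1) mod L, \<sigma>) \<and> m = (j, \<sigma>)"
        using insert_diff_eq[of m' S m "((j + 1) mod L, \<sigma>)" "(j, \<sigma>)"] True m m' by auto
      then have e: "m' = ((j + 1) mod L, \<sigma>)" "m = (j, \<sigma>)" by auto
      then have c: "x' = (x + 1) mod L \<and> j = x \<and> \<sigma> = \<tau>" using mx mx' by auto
      have "h2 L j \<sigma> ?T S = jw_sign (S - {(j, \<sigma>)}) ((j + 1) mod L, \<sigma>) * jw_sign S (j, \<sigma>)"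
        by (subst h2_val[OF L0 S j]) (rule if_P[OF True])
      then show ?thesis using c e by (simp only: if_P)
    next
      case False
      have nc: "\<not> (x' = (x + 1) mod L \<and> j = x \<and> \<sigma> = \<tau>)"
      proof
        assume "x' = (x + 1) mod L \<and> j = x \<and> \<sigma> = \<tau>"
        then have e: "(j, \<sigma>) = m" "((j + 1) mod L, \<sigma>) = m'" using mx mx' by auto
        show False using False m m' unfolding e by auto
      qed
      have "h2 L j \<sigma> ?T S = 0"
        by (subst h2_val[OF L0 S j]) (rule if_not_P[OF False])
      then show ?thesis by (simp only: if_not_P[OF nc])
    qed
    have excl: "\<not> ((x' = (x + 1) mod L \<and> j = x) \<and> (x = (x' + 1) mod L \<and> j = x'))"
      using mod_succ_ne[OF L x(1)] by auto
    have "(\<Sum>\<sigma>\<in>(UNIV::bool set). -2 * (h1 L j \<sigma> ?T S + h2 L j \<sigma> ?T S))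
        = (\<Sum>\<sigma>\<in>(UNIV::bool set). (if \<sigma> = \<tau> then -2 * ((if x = (x' + 1) mod L \<and> j = x' then ?v else 0)
              + (if x' = (x + 1) mod L \<and> j = x then ?v else 0)) else 0))"
      by (rule sum.cong) (auto simp: h1z h2z)
    also have "\<dots> = -2 * ((if x = (x' + 1) mod L \<and> j = x' then ?v else 0)
              + (if x' = (x + 1) mod L \<and> j = x then ?v else 0))"
      by simp
    also have "\<dots> = (if (x' = (x + 1) mod L \<and> j = x) \<or> (x = (x' + 1) mod L \<and> j = x') then -2 * ?v else 0)"
      using excl by auto
    finally show ?thesis .
  qed
  have "hubbard L U ?T S = (\<Sum>j<L. (if (x' = (x + 1) mod L \<and> j = x) \<or> (x = (x' + 1) mod L \<and> j = x') then -2 * ?v else 0))"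
  proof -
    have "hubbard L U ?T S = (\<Sum>j<L. \<Sum>\<sigma>\<in>(UNIV::bool set). -2 * (h1 L j \<sigma> ?T S + h2 L j \<sigma> ?T S))"
      unfolding hubbard_eq ud0 by simp
    also have "\<dots> = (\<Sum>j<L. (if (x' = (x + 1) mod L \<and> j = x) \<or> (x = (x' + 1) mod L \<and> j = x') then -2 * ?v else 0))"
      by (rule sum.cong[OF refl]) (rule key, simp)
    finally show ?thesis .
  qed
  also have "\<dots> = -2 * ?v"
  proof -
    have c: "(x' = (x + 1) mod L) \<or> (x = (x' + 1) mod L)" using adj mx mx' unfolding adjm_def by auto
    have excl2: "\<not> (x' = (x + 1) mod L \<and> x = (x' + 1) mod L)"
      using mod_succ2_ne[OF L x(1)] by auto
    show ?thesis
    proof (cases "x' = (x + 1) mod L")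
      case True
      then have "\<And>j. ((x' = (x + 1) mod L \<and> j = x) \<or> (x = (x' + 1) mod L \<and> j = x')) = (j = x)"
        using excl2 by auto
      then show ?thesis using x by simp
    next
      case False
      then have "\<And>j. ((x' = (x + 1) mod L \<and> j = x) \<or> (x = (x' + 1) mod L \<and> j = x')) = (j = x')"
        using c by auto
      then show ?thesis using x by simp
    qed
  qed
  finally show ?thesis .
qed

definition Hop :: "nat \<Rightarrow> mode set \<Rightarrow> mode set set" where
  "Hop L S = {insert m' (S - {m}) | m m'. m \<in> S \<and> m' \<notin> S \<and> adjm L m m'}"

lemma Hop_configs:
  assumes "S \<in> configs L"
  shows "Hop L S \<subseteq> configs L"
  using assms unfolding Hop_def configs_def modes_def adjm_def by (auto simp: mem_Times_iff)

lemma Hop_finite: "S \<in> configs L \<Longrightarrow> finite (Hop L S)"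
  using Hop_configs configs_finite finite_subset by blast

lemma Hop_not_self: "S \<notin> Hop L S"
  unfolding Hop_def by auto

lemma h1_diag:
  assumes "2 < L" "S \<in> configs L" "j < L"
  shows "h1 L j \<sigma> S S = 0"
proof -
  have "(j, \<sigma>) \<noteq> ((j + 1) mod L, \<sigma>)" using mod_succ_ne[OF assms(1,3)] by auto
  then have "\<not> (((j + 1) mod L, \<sigma>) \<in> S \<and> (j, \<sigma>) \<notin> S - {((j + 1) mod L, \<sigma>)}
      \<and> S = insert (j, \<sigma>) (S - {((j + 1) mod L, \<sigma>)}))" (is ?P) by auto
  then have nc: ?P .
  have L0: "0 < L" using assms(1) by simp
  show ?thesis unfolding h1_val[OF L0 assms(2,3)] by (rule if_not_P[OF nc])
qed

lemma h2_diag: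
  assumes "2 < L" "S \<in> configs L" "j < L"
  shows "h2 L j \<sigma> S S = 0"
proof -
  have "(j, \<sigma>) \<noteq> ((j + 1) mod L, \<sigma>)" using mod_succ_ne[OF assms(1,3)] by auto
  then have "\<not> ((j, \<sigma>) \<in> S \<and> ((j + 1) mod L, \<sigma>) \<notin> S - {(j, \<sigma>)}
      \<and> S = insert ((j + 1) mod L, \<sigma>) (S - {(j, \<sigma>)}))" (is ?P) by auto
  then have nc: ?P .
  have L0: "0 < L" using assms(1) by simp
  show ?thesis unfolding h2_val[OF L0 assms(2,3)] by (rule if_not_P[OF nc])
qed

definition nocc :: "mode \<Rightarrow> mode set \<Rightarrow> complex" where
  "nocc m S = (if m \<in> S then 1 else 0)"

lemma hub_diag:
  assumes "2 < L" "S \<in> configs L"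
  shows "hubbard L U S S = (\<Sum>j<L. 4 * complex_of_real U *
           ((nocc (j, True) S - 1/2) * (nocc (j, False) S - 1/2)))"
proof -
  have L0: "0 < L" using assms by simp
  show ?thesis unfolding hubbard_eq
    using h1_diag[OF assms(1,2)] h2_diag[OF assms(1,2)] ud_ent[OF L0 assms(2)]
    by (simp add: nocc_def)
qed

lemma hub_offdiag:
  assumes "2 < L" "S \<in> configs L" "T \<noteq> S" "hubbard L U T S \<noteq> 0"
  shows "T \<in> Hop L S"
proof -
  have L0: "0 < L" using assms by simp
  have ud0: "ud L j T S = 0" for j using ud_ent[OF L0 assms(2)] assms(3) by simp
  have "(\<Sum>j<L. \<Sum>\<sigma>\<in>(UNIV::bool set). -2 * (h1 L j \<sigma> T S + h2 L j \<sigma> T S)) \<noteq> 0"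
    using assms(4) unfolding hubbard_eq ud0 by simp
  then obtain j where j: "j < L" and "(\<Sum>\<sigma>\<in>(UNIV::bool set). -2 * (h1 L j \<sigma> T S + h2 L j \<sigma> T S)) \<noteq> 0"
    by (meson lessThan_iff sum.not_neutral_contains_not_neutral)
  then obtain \<sigma> where "-2 * (h1 L j \<sigma> T S + h2 L j \<sigma> T S) \<noteq> 0"
    by (meson sum.not_neutral_contains_not_neutral)
  then have "h1 L j \<sigma> T S \<noteq> 0 \<or> h2 L j \<sigma> T S \<noteq> 0" by auto
  then show ?thesis
  proof
    assume "h1 L j \<sigma> T S \<noteq> 0"
    then have c: "((j + 1) mod L, \<sigma>) \<in> S" "(j, \<sigma>) \<notin> S - {((j + 1) mod L, \<sigma>)}"
      "T = insert (j, \<sigma>) (S - {((j + 1) mod L, \<sigma>)})"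
      using h1_val[OF L0 assms(2) j] by (auto split: if_splits)
    have "(j, \<sigma>) \<noteq> ((j + 1) mod L, \<sigma>)" using mod_succ_ne[OF assms(1) j] by auto
    then have "(j, \<sigma>) \<notin> S" using c by auto
    moreover have "adjm L ((j + 1) mod L, \<sigma>) (j, \<sigma>)" unfolding adjm_def using j L0 by auto
    ultimately show ?thesis using c unfolding Hop_def by blast
  next
    assume "h2 L j \<sigma> T S \<noteq> 0"
    then have c: "(j, \<sigma>) \<in> S" "((j + 1) mod L, \<sigma>) \<notin> S - {(j, \<sigma>)}"
      "T = insert ((j + 1) mod L, \<sigma>) (S - {(j, \<sigma>)})"
      using h2_val[OF L0 assms(2) j] by (auto split: if_splits)
    have "(j, \<sigma>) \<noteq> ((j + 1) mod L, \<sigma>)" using mod_succ_ne[OF assms(1) j] by auto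
    then have "((j + 1) mod L, \<sigma>) \<notin> S" using c by auto
    moreover have "adjm L (j, \<sigma>) ((j + 1) mod L, \<sigma>)" unfolding adjm_def using j L0 by auto
    ultimately show ?thesis using c unfolding Hop_def by blast
  qed
qed

lemma h12_swap: "h1 L j \<sigma> S' S = h2 L j \<sigma> S S'"
  unfolding h1_def h2_def op_mul_def cre_def by (simp add: mult.commute)

lemma hub_sym:
  assumes "0 < L" "S \<in> configs L" "S' \<in> configs L"
  shows "hubbard L U S' S = hubbard L U S S'"
proof -
  have "ud L j S' S = ud L j S S'" for j
    using ud_ent[OF assms(1,2), of j S'] ud_ent[OF assms(1,3), of j S] by auto
  moreover have "h1 L j \<sigma> S' S + h2 L j \<sigma> S' S = h1 L j \<sigma> S S' + h2 L j \<sigma> S S'" for j \<sigma>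
    using h12_swap[of L j \<sigma> S' S] h12_swap[of L j \<sigma> S S'] by simp
  ultimately show ?thesis unfolding hubbard_eq by simp
qed

lemma sumR:
  assumes "2 < L" "S \<in> configs L"
  shows "(\<Sum>T\<in>configs L. G S' T * hubbard L U T S)
       = G S' S * hubbard L U S S + (\<Sum>T\<in>Hop L S. G S' T * hubbard L U T S)"
proof -
  have sub: "insert S (Hop L S) \<subseteq> configs L" using Hop_configs[OF assms(2)] assms(2) by auto
  have "(\<Sum>T\<in>configs L. G S' T * hubbard L U T S) = (\<Sum>T\<in>insert S (Hop L S). G S' T * hubbard L U T S)"
  proof (rule sum.mono_neutral_right[OF configs_finite sub])
    show "\<forall>T\<in>configs L - insert S (Hop L S). G S' T * hubbard L U T S = 0"
      using hub_offdiag[OF assms] by (metis DiffD2 insertCI mult_eq_0_iff)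
  qed
  also have "\<dots> = G S' S * hubbard L U S S + (\<Sum>T\<in>Hop L S. G S' T * hubbard L U T S)"
    using Hop_finite[OF assms(2)] Hop_not_self by simp
  finally show ?thesis .
qed

lemma sumL:
  assumes "2 < L" "S' \<in> configs L"
  shows "(\<Sum>T\<in>configs L. hubbard L U S' T * G T S)
       = hubbard L U S' S' * G S' S + (\<Sum>T\<in>Hop L S'. hubbard L U T S' * G T S)"
proof -
  have L0: "0 < L" using assms by simp
  have "(\<Sum>T\<in>configs L. hubbard L U S' T * G T S) = (\<Sum>T\<in>configs L. G T S * hubbard L U T S')"
    by (rule sum.cong) (auto simp: hub_sym[OF L0 _ assms(2)] mult.commute)
  also have "\<dots> = G S' S * hubbard L U S' S' + (\<Sum>T\<in>Hop L S'. G T S * hubbard L U T S')"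
    by (rule sumR[OF assms])
  finally show ?thesis by (simp add: mult.commute)
qed

lemma comm_eq:
  assumes "commutes L G (hubbard L U)" "S' \<in> configs L" "S \<in> configs L"
  shows "(\<Sum>T\<in>configs L. G S' T * hubbard L U T S) = (\<Sum>T\<in>configs L. hubbard L U S' T * G T S)"
  using assms unfolding commutes_def op_eq_def op_mul_def by auto

lemma comm_transpose:
  assumes "commutes L G (hubbard L U)" "0 < L"
  shows "commutes L (\<lambda>S' S. G S S') (hubbard L U)"
  unfolding commutes_def op_eq_def
proof (intro ballI)
  fix S' S assume S': "S' \<in> configs L" and S: "S \<in> configs L"
  have "op_mul L (\<lambda>S' S. G S S') (hubbard L U) S' S = (\<Sum>T\<in>configs L. G T S' * hubbard L U T S)"
    unfolding op_mul_def by simp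
  also have "\<dots> = (\<Sum>T\<in>configs L. hubbard L U S T * G T S')"
    by (rule sum.cong) (auto simp: hub_sym[OF assms(2) S] mult.commute)
  also have "\<dots> = (\<Sum>T\<in>configs L. G S T * hubbard L U T S')"
    using comm_eq[OF assms(1) S S'] by simp
  also have "\<dots> = (\<Sum>T\<in>configs L. hubbard L U S' T * G S T)"
    by (rule sum.cong) (auto simp: hub_sym[OF assms(2) _ S'] mult.commute)
  also have "\<dots> = op_mul L (hubbard L U) (\<lambda>S' S. G S S') S' S"
    unfolding op_mul_def by simp
  finally show "op_mul L (\<lambda>S' S. G S S') (hubbard L U) S' S = op_mul L (hubbard L U) (\<lambda>S' S. G S S') S' S" .
qed

lemma md_ne:
  fixes x d L :: nat
  assumes "0 < d" "d < L"
  shows "(x + d) mod L \<noteq> x mod L"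
proof
  assume "(x + d) mod L = x mod L"
  then have "int L dvd int (x + d) - int x" using mod_cong_int by blast
  then have "int L dvd int d" by simp
  then show False using assms zdvd_not_zless[of "int d" "int L"] by simp
qed

lemma mod_suc: "((x mod L) + 1) mod L = ((x::nat) + 1) mod L"
  by (simp add: mod_Suc_eq)

lemma adj_cases:
  assumes "0 < L" "adjm L (x mod L, \<sigma>) m'"
  shows "m' = ((x + 1) mod L, \<sigma>) \<or> m' = ((x + (L - 1)) mod L, \<sigma>)"
proof -
  obtain y \<tau> where m': "m' = (y, \<tau>)" by (cases m')
  have t: "\<tau> = \<sigma>" "y < L" using assms m' unfolding adjm_def by auto
  have "y = ((x mod L) + 1) mod L \<or> x mod L = (y + 1) mod L" using assms m' unfolding adjm_def by auto
  then show ?thesis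
  proof
    assume "y = ((x mod L) + 1) mod L"
    then show ?thesis using m' t mod_suc by simp
  next
    assume e: "x mod L = (y + 1) mod L"
    have "(x + (L - 1)) mod L = ((x mod L) + (L - 1)) mod L" by (simp add: mod_add_left_eq)
    also have "\<dots> = ((y + 1) mod L + (L - 1)) mod L" using e by simp
    also have "\<dots> = (y + 1 + (L - 1)) mod L" by (simp add: mod_add_left_eq)
    also have "\<dots> = (y + L) mod L" using assms by simp
    also have "\<dots> = y" using t by simp
    finally show ?thesis using m' t by simp
  qed
qed

lemma adj_R: "0 < L \<Longrightarrow> adjm L ((x::nat) mod L, \<sigma>) ((x + 1) mod L, \<sigma>)"
  unfolding adjm_def using mod_suc[of x L] by simp

lemma adj_L: "0 < L \<Longrightarrow> adjm L ((x + 1) mod L, \<sigma>) ((x::nat) mod L, \<sigma>)"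
  unfolding adjm_def using mod_suc[of x L] by simp

lemma far_nc:
  assumes "k \<le> d" "d + k \<le> L" "(a mod L, \<sigma>) \<in> D" "((a + d) mod L, \<sigma>') \<in> D"
  shows "\<not> coverable L k D"
proof
  assume "coverable L k D"
  then obtain l i where l: "l \<le> k" "D \<subseteq> win L l i" unfolding coverable_def by auto
  have "((a + 0) mod L, \<sigma>) \<in> win L l i" "((a + d) mod L, \<sigma>') \<in> win L l i" using l assms by auto
  moreover have "\<not> (((a + 0) mod L, \<sigma>) \<in> win L l i \<and> ((a + d) mod L, \<sigma>') \<in> win L l i)"
    by (rule not_cover_far) (use l assms in auto)
  ultimately show False by simp
qed

lemma G_far:
  assumes "SP L k G" "S' \<in> configs L" "T \<in> configs L" "k \<le> d" "d + k \<le> L"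
    "((a mod L, \<sigma>) \<in> S') \<noteq> ((a mod L, \<sigma>) \<in> T)"
    "(((a + d) mod L, \<sigma>') \<in> S') \<noteq> (((a + d) mod L, \<sigma>') \<in> T)"
  shows "G S' T = 0"
proof (rule ccontr)
  assume "G S' T \<noteq> 0"
  then have "coverable L k {m. (m \<in> S') \<noteq> (m \<in> T)}" using assms(1-3) unfolding SP_def by blast
  moreover have "\<not> coverable L k {m. (m \<in> S') \<noteq> (m \<in> T)}"
    by (rule far_nc[OF assms(4,5)]) (use assms(6,7) in auto)
  ultimately show False by simp
qed

lemma sum_pick2:
  assumes "finite H0" "T1 \<noteq> T2"
    "c1 \<Longrightarrow> T1 \<in> H0" "c2 \<Longrightarrow> T2 \<in> H0"
    "\<And>T. T \<in> H0 \<Longrightarrow> f T \<noteq> 0 \<Longrightarrow> (T = T1 \<and> c1) \<or> (T = T2 \<and> c2)"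
  shows "sum f H0 = (if c1 then f T1 else 0) + (if c2 then f T2 else 0)"
proof -
  let ?K = "{T. (T = T1 \<and> c1) \<or> (T = T2 \<and> c2)}"
  have "sum f H0 = sum f ?K"
    by (rule sum.mono_neutral_right[OF assms(1)]) (use assms(3-5) in auto)
  also have "\<dots> = (if c1 then f T1 else 0) + (if c2 then f T2 else 0)"
  proof (cases c1; cases c2)
    assume c: c1 c2
    then have "?K = {T1, T2}" by auto
    then show ?thesis using c assms(2) by simp
  next
    assume c: c1 "\<not> c2"
    then have "?K = {T1}" by auto
    then show ?thesis using c by simp
  next
    assume c: "\<not> c1" c2
    then have "?K = {T2}" by auto
    then show ?thesis using c by simp
  next
    assume c: "\<not> c1" "\<not> c2"
    then have "?K = {}" by auto
    then show ?thesis using c by simp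
  qed
  finally show ?thesis .
qed

lemma adjm_sym: "adjm L m m' \<longleftrightarrow> adjm L m' m"
  unfolding adjm_def by auto

lemma hop_ne:
  assumes "2 < L" "S \<in> configs L" "m \<in> S" "m' \<notin> S" "adjm L m m'"
  shows "hubbard L U (insert m' (S - {m})) S \<noteq> 0"
  using hop_val[OF assms, of U] jw_sign_pm[of "S - {m}" m'] jw_sign_pm[of S m] by auto

lemma HopI: "m \<in> S \<Longrightarrow> m' \<notin> S \<Longrightarrow> adjm L m m' \<Longrightarrow> insert m' (S - {m}) \<in> Hop L S"
  unfolding Hop_def by blast

definition tau0 :: "nat \<Rightarrow> nat \<Rightarrow> bool \<Rightarrow> nat \<Rightarrow> mode set \<Rightarrow> mode set" where
  "tau0 L k \<sigma> a X = (if ((a + k) mod L, \<sigma>) \<in> X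
       then insert ((a + (k - 1)) mod L, \<sigma>) (X - {((a + k) mod L, \<sigma>)}) else X)"

definition tau :: "nat \<Rightarrow> nat \<Rightarrow> bool \<Rightarrow> nat \<Rightarrow> mode set \<Rightarrow> mode set" where
  "tau L k \<sigma> a X = (let Y0 = tau0 L k \<sigma> a X in
     if ((a + 1) mod L, \<sigma>) \<in> Y0 then insert (a mod L, \<sigma>) (Y0 - {((a + 1) mod L, \<sigma>)}) else Y0)"

lemma mode_modes: "0 < L \<Longrightarrow> (x mod L, \<sigma>) \<in> modes L"
  unfolding modes_def by simp

lemma chain_step:
  fixes G :: fop
  assumes Lk: "2 * k + 2 \<le> L" "2 \<le> k"
    and SPG: "SP L k G" and comm: "commutes L G (hubbard L U)"
    and X: "X \<in> configs L"
    and nA: "(a mod L, \<sigma>) \<notin> X" and nBm: "((a + (k - 1)) mod L, \<sigma>) \<notin> X"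
  shows "G X (insert (a mod L, \<sigma>) (insert ((a + (k - 1)) mod L, \<sigma>) X)) = 0
     \<longleftrightarrow> G (tau L k \<sigma> a X) (insert ((a + 1) mod L, \<sigma>) (insert ((a + k) mod L, \<sigma>) (tau L k \<sigma> a X))) = 0"
proof -
  define A where "A = (a mod L, \<sigma>)"
  define A1 where "A1 = ((a + 1) mod L, \<sigma>)"
  define Bm where "Bm = ((a + (k - 1)) mod L, \<sigma>)"
  define B where "B = ((a + k) mod L, \<sigma>)"
  define Y0 where "Y0 = tau0 L k \<sigma> a X"
  define Y where "Y = tau L k \<sigma> a X"
  have L2: "2 < L" and L0: "0 < L" using Lk by auto
  have kk: "a + (k - 1) + 1 = a + k" "a + 1 + (k - 1) = a + k" using Lk by auto
  have n1: "(a + 1) mod L \<noteq> a mod L" by (rule md_ne) (use L2 in auto)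
  have n2: "(a + (k - 1)) mod L \<noteq> a mod L" by (rule md_ne) (use Lk in auto)
  have n3: "(a + k) mod L \<noteq> a mod L" by (rule md_ne) (use Lk in auto)
  have n4: "(a + 1 + (k - 1)) mod L \<noteq> (a + 1) mod L" by (rule md_ne) (use Lk in auto)
  have n5: "(a + (k - 1) + 1) mod L \<noteq> (a + (k - 1)) mod L" by (rule md_ne) (use Lk in auto)
  have dAA1: "A \<noteq> A1" unfolding A_def A1_def using n1 by auto
  have dABm: "A \<noteq> Bm" unfolding A_def Bm_def using n2 by auto
  have dAB: "A \<noteq> B" unfolding A_def B_def using n3 by auto
  have dA1B: "A1 \<noteq> B" unfolding A1_def B_def using n4 kk by auto
  have dBmB: "Bm \<noteq> B" unfolding Bm_def B_def using n5 kk by auto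
  have mA: "A \<in> modes L" "A1 \<in> modes L" "Bm \<in> modes L" "B \<in> modes L"
    unfolding A_def A1_def Bm_def B_def using mode_modes[OF L0] by auto
  have Y0c: "Y0 \<in> configs L" using X mA unfolding Y0_def tau0_def B_def Bm_def configs_def by auto
  have nAY0: "A \<notin> Y0" using nA dABm unfolding Y0_def tau0_def A_def Bm_def B_def by auto
  have nBY0: "B \<notin> Y0" using dBmB unfolding Y0_def tau0_def Bm_def B_def by auto
  have BmY0: "Bm \<in> Y0 \<longleftrightarrow> B \<in> X" using nBm unfolding Y0_def tau0_def Bm_def B_def by auto
  define S where "S = insert A (insert B Y0)"
  have Sc: "S \<in> configs L" using Y0c mA unfolding S_def configs_def by auto
  have eq: "(\<Sum>T\<in>configs L. G Y0 T * hubbard L U T S) = (\<Sum>T\<in>configs L. hubbard L U Y0 T * G T S)"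
    by (rule comm_eq[OF comm Y0c Sc])
  have far1: "G S' T = 0" if "S' \<in> configs L" "T \<in> configs L" "k \<le> d" "d + k \<le> L"
    "((x mod L, \<sigma>) \<in> S') \<noteq> ((x mod L, \<sigma>) \<in> T)"
    "(((x + d) mod L, \<sigma>) \<in> S') \<noteq> (((x + d) mod L, \<sigma>) \<in> T)" for S' T d x
    using G_far[OF SPG that] .
  have GS: "G Y0 S = 0"
    by (rule far1[OF Y0c Sc, of k a]) (use Lk nAY0 nBY0 in \<open>auto simp: S_def A_def B_def\<close>)
  have modLm1: "(a + (L - 1) + (k + 1)) mod L = (a + k) mod L"
  proof -
    have "a + (L - 1) + (k + 1) = (a + k) + L" using L0 by simp
    then show ?thesis by (metis mod_add_self2)
  qed
  have modkm1: "(a + k + (L - 1)) mod L = (a + (k - 1)) mod L"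
  proof -
    have "a + k + (L - 1) = (a + (k - 1)) + L" using L0 Lk by simp
    then show ?thesis by (metis mod_add_self2)
  qed
  have adjBBm: "adjm L B Bm" unfolding B_def Bm_def using adj_L[OF L0, of "a + (k - 1)" \<sigma>] kk by simp
  have adjAA1: "adjm L A A1" unfolding A_def A1_def using adj_R[OF L0] by simp
  have adjA1A: "adjm L A1 A" using adjAA1 adjm_sym by blast
  have adjBmB: "adjm L Bm B" using adjBBm adjm_sym by blast
  define TR1 where "TR1 = insert Bm (S - {B})"
  define TR2 where "TR2 = insert A1 (S - {A})"
  define TL1 where "TL1 = insert A (Y0 - {A1})"
  define TL2 where "TL2 = insert B (Y0 - {Bm})"
  have BmS: "Bm \<in> S \<longleftrightarrow> Bm \<in> Y0" unfolding S_def using dABm dBmB by auto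
  have A1S: "A1 \<in> S \<longleftrightarrow> A1 \<in> Y0" unfolding S_def using dAA1 dA1B by auto
  have lhs: "(\<Sum>T\<in>configs L. G Y0 T * hubbard L U T S)
      = (if Bm \<notin> S then G Y0 TR1 * hubbard L U TR1 S else 0)
        + (if A1 \<notin> S then G Y0 TR2 * hubbard L U TR2 S else 0)"
  proof -
    have "(\<Sum>T\<in>configs L. G Y0 T * hubbard L U T S) = (\<Sum>T\<in>Hop L S. G Y0 T * hubbard L U T S)"
      using sumR[OF L2 Sc, of G Y0 U] GS by simp
    also have "\<dots> = (if Bm \<notin> S then G Y0 TR1 * hubbard L U TR1 S else 0)
        + (if A1 \<notin> S then G Y0 TR2 * hubbard L U TR2 S else 0)"
    proof (rule sum_pick2[OF Hop_finite[OF Sc]])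
      show "TR1 \<noteq> TR2" unfolding TR1_def TR2_def S_def using dAB dAA1 dABm by auto
      show "Bm \<notin> S \<Longrightarrow> TR1 \<in> Hop L S" unfolding TR1_def
        by (rule HopI) (use adjBBm in \<open>auto simp: S_def\<close>)
      show "A1 \<notin> S \<Longrightarrow> TR2 \<in> Hop L S" unfolding TR2_def
        by (rule HopI) (use adjAA1 in \<open>auto simp: S_def\<close>)
    next
      fix T assume T: "T \<in> Hop L S" and ne: "G Y0 T * hubbard L U T S \<noteq> 0"
      then obtain m m' where mm: "m \<in> S" "m' \<notin> S" "adjm L m m'" "T = insert m' (S - {m})"
        unfolding Hop_def by auto
      have Tc: "T \<in> configs L" using T Hop_configs[OF Sc] by auto
      have G0: "G Y0 T \<noteq> 0" using ne by auto
      have m'Y0: "m' \<notin> Y0" using mm unfolding S_def by auto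
      show "(T = TR1 \<and> Bm \<notin> S) \<or> (T = TR2 \<and> A1 \<notin> S)"
      proof (cases "m = A")
        case True
        have "m' = A1 \<or> m' = ((a + (L - 1)) mod L, \<sigma>)"
          using adj_cases[OF L0] mm(3) True unfolding A_def A1_def by blast
        moreover have "m' \<noteq> ((a + (L - 1)) mod L, \<sigma>)"
        proof
          assume e: "m' = ((a + (L - 1)) mod L, \<sigma>)"
          have "G Y0 T = 0"
            by (rule far1[OF Y0c Tc, of "k + 1" "a + (L - 1)"])
               (use Lk e mm m'Y0 nBY0 True dAB modLm1 in \<open>auto simp: S_def B_def\<close>)
          then show False using G0 by simp
        qed
        ultimately show ?thesis using True mm unfolding TR2_def by auto
      next
        case nA': False
        show ?thesis
        proof (cases "m = B")
          case True
          have "m' = ((a + k + 1) mod L, \<sigma>) \<or> m' = Bm"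
            using adj_cases[OF L0] mm(3) True modkm1 unfolding B_def Bm_def by metis
          moreover have "m' \<noteq> ((a + k + 1) mod L, \<sigma>)"
          proof
            assume e: "m' = ((a + k + 1) mod L, \<sigma>)"
            have "G Y0 T = 0"
              by (rule far1[OF Y0c Tc, of "k + 1" a])
                 (use Lk e mm m'Y0 nAY0 True dAB in \<open>auto simp: S_def A_def add.assoc\<close>)
            then show False using G0 by simp
          qed
          ultimately show ?thesis using True mm unfolding TR1_def by auto
        next
          case False
          have "G Y0 T = 0"
            by (rule far1[OF Y0c Tc, of k a])
               (use Lk mm nAY0 nBY0 False nA' in \<open>auto simp: S_def A_def B_def\<close>)
          then show ?thesis using G0 by simp
        qed
      qed
    qed
    finally show ?thesis .
  qed
  have rhs: "(\<Sum>T\<in>configs L. hubbard L U Y0 T * G T S)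
      = (if A1 \<in> Y0 then hubbard L U TL1 Y0 * G TL1 S else 0)
        + (if Bm \<in> Y0 then hubbard L U TL2 Y0 * G TL2 S else 0)"
  proof -
    have "(\<Sum>T\<in>configs L. hubbard L U Y0 T * G T S) = (\<Sum>T\<in>Hop L Y0. hubbard L U T Y0 * G T S)"
      using sumL[OF L2 Y0c, of U G S] GS by simp
    also have "\<dots> = (if A1 \<in> Y0 then hubbard L U TL1 Y0 * G TL1 S else 0)
        + (if Bm \<in> Y0 then hubbard L U TL2 Y0 * G TL2 S else 0)"
    proof (rule sum_pick2[OF Hop_finite[OF Y0c]])
      show "TL1 \<noteq> TL2" unfolding TL1_def TL2_def using dAB nBY0 by auto
      show "A1 \<in> Y0 \<Longrightarrow> TL1 \<in> Hop L Y0" unfolding TL1_def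
        by (rule HopI) (use adjA1A nAY0 in auto)
      show "Bm \<in> Y0 \<Longrightarrow> TL2 \<in> Hop L Y0" unfolding TL2_def
        by (rule HopI) (use adjBmB nBY0 in auto)
    next
      fix T assume T: "T \<in> Hop L Y0" and ne: "hubbard L U T Y0 * G T S \<noteq> 0"
      then obtain m m' where mm: "m \<in> Y0" "m' \<notin> Y0" "adjm L m m'" "T = insert m' (Y0 - {m})"
        unfolding Hop_def by auto
      have Tc: "T \<in> configs L" using T Hop_configs[OF Y0c] by auto
      have G0: "G T S \<noteq> 0" using ne by auto
      have mS: "m \<in> S" "m \<notin> T" using mm unfolding S_def by auto
      have adj': "adjm L m' m" using mm(3) adjm_sym by blast
      show "(T = TL1 \<and> A1 \<in> Y0) \<or> (T = TL2 \<and> Bm \<in> Y0)"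
      proof (cases "m' = A")
        case True
        have "m = A1 \<or> m = ((a + (L - 1)) mod L, \<sigma>)"
          using adj_cases[OF L0] adj' True unfolding A_def A1_def by blast
        moreover have "m \<noteq> ((a + (L - 1)) mod L, \<sigma>)"
        proof
          assume e: "m = ((a + (L - 1)) mod L, \<sigma>)"
          have "G T S = 0"
            by (rule far1[OF Tc Sc, of "k + 1" "a + (L - 1)"])
               (use Lk e mm mS nBY0 True dAB modLm1 in \<open>auto simp: S_def B_def\<close>)
          then show False using G0 by simp
        qed
        ultimately show ?thesis using True mm unfolding TL1_def by auto
      next
        case nA': False
        show ?thesis
        proof (cases "m' = B")
          case True
          have "m = ((a + k + 1) mod L, \<sigma>) \<or> m = Bm"
            using adj_cases[OF L0] adj' True modkm1 unfolding B_def Bm_def by metis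
          moreover have "m \<noteq> ((a + k + 1) mod L, \<sigma>)"
          proof
            assume e: "m = ((a + k + 1) mod L, \<sigma>)"
            have "G T S = 0"
              by (rule far1[OF Tc Sc, of "k + 1" a])
                 (use Lk e mm mS nAY0 True dAB in \<open>auto simp: S_def A_def add.assoc\<close>)
            then show False using G0 by simp
          qed
          ultimately show ?thesis using True mm unfolding TL2_def by auto
        next
          case False
          have "G T S = 0"
            by (rule far1[OF Tc Sc, of k a])
               (use Lk mm nAY0 nBY0 False nA' in \<open>auto simp: S_def A_def B_def\<close>)
          then show ?thesis using G0 by simp
        qed
      qed
    qed
    finally show ?thesis .
  qed
  define P where "P = G X (insert A (insert Bm X))"
  define Q where "Q = G Y (insert A1 (insert B Y))"
  have hR1: "Bm \<notin> S \<Longrightarrow> hubbard L U TR1 S \<noteq> 0"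
    unfolding TR1_def by (rule hop_ne[OF L2 Sc]) (use adjBBm in \<open>auto simp: S_def\<close>)
  have hR2: "A1 \<notin> S \<Longrightarrow> hubbard L U TR2 S \<noteq> 0"
    unfolding TR2_def by (rule hop_ne[OF L2 Sc]) (use adjAA1 in \<open>auto simp: S_def\<close>)
  have hL1: "A1 \<in> Y0 \<Longrightarrow> hubbard L U TL1 Y0 \<noteq> 0"
    unfolding TL1_def by (rule hop_ne[OF L2 Y0c]) (use adjA1A nAY0 in auto)
  have hL2: "Bm \<in> Y0 \<Longrightarrow> hubbard L U TL2 Y0 \<noteq> 0"
    unfolding TL2_def by (rule hop_ne[OF L2 Y0c]) (use adjBmB nBY0 in auto)
  have vR1: "Bm \<notin> Y0 \<Longrightarrow> G Y0 TR1 = P"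
  proof -
    assume h: "Bm \<notin> Y0"
    then have "B \<notin> X" using BmY0 by simp
    then have "Y0 = X" unfolding Y0_def tau0_def B_def by simp
    moreover have "TR1 = insert A (insert Bm Y0)" unfolding TR1_def S_def using nBY0 dAB by auto
    ultimately show ?thesis unfolding P_def by simp
  qed
  have vL2: "Bm \<in> Y0 \<Longrightarrow> G TL2 S = P"
  proof -
    assume h: "Bm \<in> Y0"
    then have BX: "B \<in> X" using BmY0 by simp
    then have Y0e: "Y0 = insert Bm (X - {B})" unfolding Y0_def tau0_def B_def Bm_def by simp
    have "TL2 = X" unfolding TL2_def Y0e using BX nBm dBmB unfolding Bm_def by auto
    moreover have "S = insert A (insert Bm X)" unfolding S_def Y0e using BX by auto
    ultimately show ?thesis unfolding P_def by simp
  qed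
  have vR2: "A1 \<notin> Y0 \<Longrightarrow> G Y0 TR2 = Q"
  proof -
    assume h: "A1 \<notin> Y0"
    then have "Y = Y0" unfolding Y_def tau_def Y0_def A1_def by (simp add: Let_def)
    moreover have "TR2 = insert A1 (insert B Y0)" unfolding TR2_def S_def using nAY0 dAB by auto
    ultimately show ?thesis unfolding Q_def by simp
  qed
  have vL1: "A1 \<in> Y0 \<Longrightarrow> G TL1 S = Q"
  proof -
    assume h: "A1 \<in> Y0"
    then have Ye: "Y = TL1" unfolding Y_def tau_def Y0_def A1_def TL1_def A_def by (simp add: Let_def)
    have "insert A1 (insert B Y) = S" unfolding Ye TL1_def S_def using h by auto
    then show ?thesis unfolding Q_def Ye by simp
  qed
  have main: "P = 0 \<longleftrightarrow> Q = 0"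
  proof (cases "Bm \<in> Y0"; cases "A1 \<in> Y0")
    assume c: "Bm \<in> Y0" "A1 \<in> Y0"
    then have "0 = hubbard L U TL1 Y0 * Q + hubbard L U TL2 Y0 * P"
      using eq lhs rhs BmS A1S vL1 vL2 by simp
    then show ?thesis using hL1[OF c(2)] hL2[OF c(1)] by (metis add.left_neutral mult_eq_0_iff add_cancel_left_right)
  next
    assume c: "Bm \<in> Y0" "A1 \<notin> Y0"
    then have "Q * hubbard L U TR2 S = hubbard L U TL2 Y0 * P"
      using eq lhs rhs BmS A1S vR2 vL2 by simp
    then show ?thesis using hR2 c A1S hL2[OF c(1)] by (metis mult_eq_0_iff)
  next
    assume c: "Bm \<notin> Y0" "A1 \<in> Y0"
    then have "P * hubbard L U TR1 S = hubbard L U TL1 Y0 * Q"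
      using eq lhs rhs BmS A1S vR1 vL1 by simp
    then show ?thesis using hR1 c BmS hL1[OF c(2)] by (metis mult_eq_0_iff)
  next
    assume c: "Bm \<notin> Y0" "A1 \<notin> Y0"
    then have "P * hubbard L U TR1 S + Q * hubbard L U TR2 S = 0"
      using eq lhs rhs BmS A1S vR1 vR2 by simp
    then show ?thesis using hR1 hR2 c BmS A1S by (metis add.left_neutral mult_eq_0_iff add_cancel_left_right)
  qed
  then show ?thesis unfolding P_def Q_def A_def Bm_def Y_def A1_def B_def .
qed

definition sg :: "nat \<Rightarrow> nat \<Rightarrow> complex" where
  "sg x y = (if x < y then -1 else 1)"

definition phi :: "fop \<Rightarrow> bool \<Rightarrow> nat \<Rightarrow> nat \<Rightarrow> complex" where
  "phi G \<sigma> x y = G {} {(x, \<sigma>), (y, \<sigma>)} * sg x y"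

lemma jw1: "jw_sign {(y, \<sigma>)} (x, \<sigma>) = (if y < x then -1 else 1)"
proof -
  have "{m' \<in> {(y, \<sigma>)}. mode_rank m' < mode_rank (x, \<sigma>)} = (if y < x then {(y, \<sigma>)} else {})"
    by (auto simp: mode_rank_def)
  then show ?thesis unfolding jw_sign_def by simp
qed

lemma jw2: "x \<noteq> y \<Longrightarrow> jw_sign {(x, \<sigma>), (y, \<sigma>)} (x, \<sigma>) = (if y < x then -1 else 1)"
proof -
  assume "x \<noteq> y"
  have "{m' \<in> {(x, \<sigma>), (y, \<sigma>)}. mode_rank m' < mode_rank (x, \<sigma>)} = (if y < x then {(y, \<sigma>)} else {})"
    by (auto simp: mode_rank_def)
  then show ?thesis unfolding jw_sign_def by simp
qed

lemma pair_configs: "x < L \<Longrightarrow> y < L \<Longrightarrow> {(x, \<sigma>), (y, \<sigma>)} \<in> configs L"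
  unfolding configs_def modes_def by auto

lemma C1:
  assumes L: "2 < L" and xy: "x < L" "y < L" "x' < L" "x \<noteq> y" "x' \<noteq> y"
    and adj: "adjm L (x, \<sigma>) (x', \<sigma>)"
  shows "G {} {(x', \<sigma>), (y, \<sigma>)} * hubbard L U {(x', \<sigma>), (y, \<sigma>)} {(x, \<sigma>), (y, \<sigma>)}
       = -2 * sg x y * phi G \<sigma> x' y"
proof -
  let ?S = "{(x, \<sigma>), (y, \<sigma>)}"
  have Sc: "?S \<in> configs L" using pair_configs xy by auto
  have xx': "x \<noteq> x'"
  proof
    assume "x = x'"
    then have "x = (x + 1) mod L" using adj unfolding adjm_def by auto
    then show False using mod_succ_ne[OF L xy(1)] by simp
  qed
  have e: "insert (x', \<sigma>) (?S - {(x, \<sigma>)}) = {(x', \<sigma>), (y, \<sigma>)}" using xy by auto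
  have e2: "?S - {(x, \<sigma>)} = {(y, \<sigma>)}" using xy by auto
  have h: "hubbard L U {(x', \<sigma>), (y, \<sigma>)} ?S = -2 * (jw_sign {(y, \<sigma>)} (x', \<sigma>) * jw_sign ?S (x, \<sigma>))"
    using hop_val[OF L Sc _ _ adj, of U] e e2 xy xx' by auto
  have ss: "sg x' y * sg x' y = 1" unfolding sg_def by simp
  have "G {} {(x', \<sigma>), (y, \<sigma>)} = phi G \<sigma> x' y * sg x' y"
    unfolding phi_def using ss by (simp add: mult.assoc)
  then show ?thesis unfolding h jw1 jw2[OF xy(4)] using xy
    by (auto simp: sg_def)
qed

lemma sg_swap: "x \<noteq> y \<Longrightarrow> sg y x = - sg x y"
  unfolding sg_def by auto

lemma sg_sq: "sg x y * sg x y = 1"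
  unfolding sg_def by auto

lemma phi_swap: "x \<noteq> y \<Longrightarrow> phi G \<sigma> y x = - phi G \<sigma> x y"
  unfolding phi_def using sg_swap[of x y] by (simp add: insert_commute)

lemma G_phi: "G {} {(x, \<sigma>), (y, \<sigma>)} = phi G \<sigma> x y * sg x y"
  unfolding phi_def using sg_sq[of x y] by (simp add: mult.assoc)

lemma Hop_empty: "Hop L {} = {}"
  unfolding Hop_def by auto

lemma empty_configs: "{} \<in> configs L"
  unfolding configs_def by simp

lemma diag_pair:
  assumes L: "2 < L" and xy: "x < L" "y < L" "x \<noteq> y"
  shows "hubbard L U {(x, \<sigma>), (y, \<sigma>)} {(x, \<sigma>), (y, \<sigma>)} = hubbard L U {} {} - 4 * complex_of_real U"
proof -
  let ?S = "{(x, \<sigma>), (y, \<sigma>)}"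
  have Sc: "?S \<in> configs L" using pair_configs xy by auto
  let ?f = "\<lambda>S j. 4 * complex_of_real U * ((nocc (j, True) S - 1/2) * (nocc (j, False) S - 1/2))"
  have d: "?f ?S j - ?f {} j = (if j = x then -2 * complex_of_real U else 0) + (if j = y then -2 * complex_of_real U else 0)" for j
    using xy by (cases \<sigma>) (auto simp: nocc_def algebra_simps)
  have "hubbard L U ?S ?S - hubbard L U {} {} = (\<Sum>j<L. ?f ?S j - ?f {} j)"
    unfolding hub_diag[OF L Sc] hub_diag[OF L empty_configs] by (simp add: sum_subtractf)
  also have "\<dots> = -4 * complex_of_real U"
    unfolding d using xy by (simp add: sum.distrib)
  finally show ?thesis by (simp add: algebra_simps)
qed

locale CQ =
  fixes L k :: nat and U :: real and G :: fop and \<sigma> :: bool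
  assumes Lk: "2 * k + 2 \<le> L" "2 \<le> k"
    and SPG: "SP L k G" and comm: "commutes L G (hubbard L U)"
begin

lemma L2: "2 < L" and L0: "0 < L" using Lk by auto

lemma far1: "G S' T = 0" if "S' \<in> configs L" "T \<in> configs L" "k \<le> d" "d + k \<le> L"
    "((x mod L, \<sigma>) \<in> S') \<noteq> ((x mod L, \<sigma>) \<in> T)"
    "(((x + d) mod L, \<sigma>) \<in> S') \<noteq> (((x + d) mod L, \<sigma>) \<in> T)" for S' T d x
  using G_far[OF SPG that] .

lemma modshift: "(x + (L - 1) + (d + 1)) mod L = (x + d) mod L"
proof -
  have "x + (L - 1) + (d + 1) = (x + d) + L" using L0 by simp
  then show ?thesis by (metis mod_add_self2)
qed

lemma modshift2: "1 \<le> d \<Longrightarrow> (x + d + (L - 1)) mod L = (x + (d - 1)) mod L"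
proof -
  assume "1 \<le> d"
  then have "x + d + (L - 1) = (x + (d - 1)) + L" using L0 by simp
  then show ?thesis by (metis mod_add_self2)
qed

lemma ne_mod: "0 < d \<Longrightarrow> d < L \<Longrightarrow> (x + d) mod L \<noteq> x mod L"
  by (rule md_ne)

lemma E_far:
  "phi G \<sigma> ((a + 1) mod L) ((a + k) mod L) + phi G \<sigma> (a mod L) ((a + (k - 1)) mod L) = 0"
proof -
  define A where "A = (a mod L, \<sigma>)"
  define A1 where "A1 = ((a + 1) mod L, \<sigma>)"
  define Bm where "Bm = ((a + (k - 1)) mod L, \<sigma>)"
  define B where "B = ((a + k) mod L, \<sigma>)"
  have kk: "a + (k - 1) + 1 = a + k" "a + 1 + (k - 1) = a + k" using Lk by auto
  have n1: "(a + 1) mod L \<noteq> a mod L" by (rule md_ne) (use L2 in auto)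
  have n3: "(a + k) mod L \<noteq> a mod L" by (rule md_ne) (use Lk in auto)
  have n4: "(a + 1 + (k - 1)) mod L \<noteq> (a + 1) mod L" by (rule md_ne) (use Lk in auto)
  have n5: "(a + (k - 1) + 1) mod L \<noteq> (a + (k - 1)) mod L" by (rule md_ne) (use Lk in auto)
  have n2: "(a + (k - 1)) mod L \<noteq> a mod L" by (rule md_ne) (use Lk in auto)
  have dAA1: "A \<noteq> A1" unfolding A_def A1_def using n1 by auto
  have dABm: "A \<noteq> Bm" unfolding A_def Bm_def using n2 by auto
  have dAB: "A \<noteq> B" unfolding A_def B_def using n3 by auto
  have dA1B: "A1 \<noteq> B" unfolding A1_def B_def using n4 kk by auto
  have dBmB: "Bm \<noteq> B" unfolding Bm_def B_def using n5 kk by auto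
  define S where "S = {A, B}"
  have Sc: "S \<in> configs L" unfolding S_def A_def B_def using pair_configs L0 by auto
  have GS: "G {} S = 0"
    by (rule far1[OF empty_configs Sc, of k a]) (use Lk in \<open>auto simp: S_def A_def B_def\<close>)
  have eq: "(\<Sum>T\<in>configs L. G {} T * hubbard L U T S) = (\<Sum>T\<in>configs L. hubbard L U {} T * G T S)"
    by (rule comm_eq[OF comm empty_configs Sc])
  have rhs: "(\<Sum>T\<in>configs L. hubbard L U {} T * G T S) = 0"
    using sumL[OF L2 empty_configs, of U G S] GS Hop_empty by simp
  have adjAA1: "adjm L A A1" unfolding A_def A1_def using adj_R[OF L0] by simp
  have adjBBm: "adjm L B Bm" unfolding B_def Bm_def using adj_L[OF L0, of "a + (k - 1)" \<sigma>] kk by simp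
  define T1 where "T1 = {A1, B}"
  define T2 where "T2 = {A, Bm}"
  have T1e: "T1 = insert A1 (S - {A})" unfolding T1_def S_def using dAB by auto
  have T2e: "T2 = insert Bm (S - {B})" unfolding T2_def S_def using dAB by auto
  have lhs: "(\<Sum>T\<in>configs L. G {} T * hubbard L U T S)
      = (if True then G {} T1 * hubbard L U T1 S else 0) + (if True then G {} T2 * hubbard L U T2 S else 0)"
  proof -
    have "(\<Sum>T\<in>configs L. G {} T * hubbard L U T S) = (\<Sum>T\<in>Hop L S. G {} T * hubbard L U T S)"
      using sumR[OF L2 Sc, of G "{}" U] GS by simp
    also have "\<dots> = (if True then G {} T1 * hubbard L U T1 S else 0) + (if True then G {} T2 * hubbard L U T2 S else 0)"
    proof (rule sum_pick2[OF Hop_finite[OF Sc]])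
      have "A \<in> T2" "A \<notin> T1" unfolding T1_def T2_def using dAA1 dAB by auto
      then show "T1 \<noteq> T2" by blast
      show "True \<Longrightarrow> T1 \<in> Hop L S" unfolding T1e
        by (rule HopI) (use adjAA1 dAA1 dA1B in \<open>auto simp: S_def\<close>)
      show "True \<Longrightarrow> T2 \<in> Hop L S" unfolding T2e
        by (rule HopI) (use adjBBm dABm dBmB in \<open>auto simp: S_def\<close>)
    next
      fix T assume T: "T \<in> Hop L S" and ne: "G {} T * hubbard L U T S \<noteq> 0"
      then obtain m m' where mm: "m \<in> S" "m' \<notin> S" "adjm L m m'" "T = insert m' (S - {m})"
        unfolding Hop_def by auto
      have Tc: "T \<in> configs L" using T Hop_configs[OF Sc] by auto
      have G0: "G {} T \<noteq> 0" using ne by auto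
      show "(T = T1 \<and> True) \<or> (T = T2 \<and> True)"
      proof (cases "m = A")
        case True
        have "m' = A1 \<or> m' = ((a + (L - 1)) mod L, \<sigma>)"
          using adj_cases[OF L0] mm(3) True unfolding A_def A1_def by blast
        moreover have "m' \<noteq> ((a + (L - 1)) mod L, \<sigma>)"
        proof
          assume e: "m' = ((a + (L - 1)) mod L, \<sigma>)"
          have BT: "B \<in> T" using mm True dAB by (auto simp: S_def)
          have m'T: "m' \<in> T" using mm by auto
          have eB: "(((a + (L - 1)) + (k + 1)) mod L, \<sigma>) = B" using modshift[of a k] unfolding B_def by simp
          have "G {} T = 0"
            by (rule far1[OF empty_configs Tc, of "k + 1" "a + (L - 1)"])
               (use Lk BT m'T e eB in simp_all)
          then show False using G0 by simp
        qed
        ultimately show ?thesis using True mm T1e by auto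
      next
        case False
        then have mB: "m = B" using mm(1) unfolding S_def by auto
        have c: "m' = ((a + k + 1) mod L, \<sigma>) \<or> m' = ((a + k + (L - 1)) mod L, \<sigma>)"
          using adj_cases[OF L0, of "a + k" \<sigma> m'] mm(3) mB unfolding B_def by simp
        have ms: "((a + k + (L - 1)) mod L, \<sigma>) = Bm" using modshift2[of k a] Lk unfolding Bm_def by simp
        have "m' = ((a + k + 1) mod L, \<sigma>) \<or> m' = Bm" using c unfolding ms .
        moreover have "m' \<noteq> ((a + k + 1) mod L, \<sigma>)"
        proof
          assume e: "m' = ((a + k + 1) mod L, \<sigma>)"
          have AT: "A \<in> T" using mm mB dAB by (auto simp: S_def)
          have m'T: "m' \<in> T" using mm by auto
          have eA: "(a mod L, \<sigma>) = A" unfolding A_def by simp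
          have em: "((a + (k + 1)) mod L, \<sigma>) = m'" using e by (simp add: add.assoc)
          have "G {} T = 0"
            by (rule far1[OF empty_configs Tc, of "k + 1" a])
               (use Lk AT m'T eA em in simp_all)
          then show False using G0 by simp
        qed
        ultimately show ?thesis using mB mm T2e by auto
      qed
    qed
    finally show ?thesis .
  qed
  have lt: "a mod L < L" "(a + 1) mod L < L" "(a + k) mod L < L" "(a + (k - 1)) mod L < L"
    using L0 by auto
  have v1: "G {} T1 * hubbard L U T1 S = -2 * sg (a mod L) ((a + k) mod L) * phi G \<sigma> ((a + 1) mod L) ((a + k) mod L)"
    unfolding T1_def S_def A_def A1_def B_def
    by (rule C1[OF L2 lt(1,3,2)]) (use n3 n4 kk adj_R[OF L0] in auto)
  have v2: "G {} T2 * hubbard L U T2 S = -2 * sg ((a + k) mod L) (a mod L) * phi G \<sigma> ((a + (k - 1)) mod L) (a mod L)"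
  proof -
    have "T2 = {((a + (k - 1)) mod L, \<sigma>), (a mod L, \<sigma>)}" "S = {((a + k) mod L, \<sigma>), (a mod L, \<sigma>)}"
      unfolding T2_def S_def A_def Bm_def B_def by auto
    moreover have "G {} {((a + (k - 1)) mod L, \<sigma>), (a mod L, \<sigma>)} * hubbard L U {((a + (k - 1)) mod L, \<sigma>), (a mod L, \<sigma>)} {((a + k) mod L, \<sigma>), (a mod L, \<sigma>)}
       = -2 * sg ((a + k) mod L) (a mod L) * phi G \<sigma> ((a + (k - 1)) mod L) (a mod L)"
      by (rule C1[OF L2 lt(3,1,4)]) (use n3 n2 adjBBm in \<open>auto simp: B_def Bm_def\<close>)
    ultimately show ?thesis by simp
  qed
  have e0: "G {} T1 * hubbard L U T1 S + G {} T2 * hubbard L U T2 S = 0" using eq lhs rhs by simp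
  have "-2 * sg (a mod L) ((a + k) mod L) * (phi G \<sigma> ((a + 1) mod L) ((a + k) mod L)
        + phi G \<sigma> (a mod L) ((a + (k - 1)) mod L)) = 0"
    using e0 unfolding v1 v2 sg_swap[OF n3[symmetric]] phi_swap[OF n2[symmetric], of G \<sigma>]
    by (simp add: ring_distribs)
  moreover have "sg (a mod L) ((a + k) mod L) \<noteq> 0" unfolding sg_def by simp
  ultimately show ?thesis by simp
qed

end

context CQ
begin

lemma E_near:
  "-4 * complex_of_real U * phi G \<sigma> (a mod L) ((a + (k - 1)) mod L)
   = (if 3 \<le> k then 2 * (phi G \<sigma> ((a + 1) mod L) ((a + (k - 1)) mod L)
                      + phi G \<sigma> (a mod L) ((a + (k - 2)) mod L)) else 0)"
proof -
  define A where "A = (a mod L, \<sigma>)"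
  define A1 where "A1 = ((a + 1) mod L, \<sigma>)"
  define Bm where "Bm = ((a + (k - 1)) mod L, \<sigma>)"
  define Bm2 where "Bm2 = ((a + (k - 2)) mod L, \<sigma>)"
  have n1: "(a + 1) mod L \<noteq> a mod L" by (rule md_ne) (use L2 in auto)
  have n2: "(a + (k - 1)) mod L \<noteq> a mod L" by (rule md_ne) (use Lk in auto)
  have n6: "(a + (k - 2) + 1) mod L \<noteq> (a + (k - 2)) mod L" by (rule md_ne) (use L2 in auto)
  have kk: "a + (k - 2) + 1 = a + (k - 1)" using Lk by auto
  have dAA1: "A \<noteq> A1" unfolding A_def A1_def using n1 by auto
  have dABm: "A \<noteq> Bm" unfolding A_def Bm_def using n2 by auto
  have eBm: "Bm = ((a + (k - 2) + 1) mod L, \<sigma>)" unfolding Bm_def kk ..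
  have dBm2Bm: "Bm2 \<noteq> Bm" unfolding Bm2_def eBm using n6 by simp
  have k3a: "A1 \<noteq> Bm \<Longrightarrow> 3 \<le> k"
  proof (rule ccontr)
    assume "A1 \<noteq> Bm" "\<not> 3 \<le> k"
    then have "k = 2" using Lk by auto
    then show False using \<open>A1 \<noteq> Bm\<close> unfolding A1_def Bm_def by simp
  qed
  have k3b: "Bm2 \<noteq> A \<Longrightarrow> 3 \<le> k"
  proof (rule ccontr)
    assume "Bm2 \<noteq> A" "\<not> 3 \<le> k"
    then have "k = 2" using Lk by auto
    then show False using \<open>Bm2 \<noteq> A\<close> unfolding Bm2_def A_def by simp
  qed
  have k3c: "3 \<le> k \<Longrightarrow> A1 \<noteq> Bm"
  proof -
    assume k3: "3 \<le> k"
    have ne: "(a + 1 + (k - 2)) mod L \<noteq> (a + 1) mod L" by (rule md_ne) (use Lk k3 in auto)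
    have e: "a + (k - 1) = a + 1 + (k - 2)" using k3 by auto
    have "Bm = ((a + 1 + (k - 2)) mod L, \<sigma>)" unfolding Bm_def e ..
    then show ?thesis unfolding A1_def using ne by simp
  qed
  have k3d: "3 \<le> k \<Longrightarrow> Bm2 \<noteq> A"
  proof -
    assume k3: "3 \<le> k"
    have "(a + (k - 2)) mod L \<noteq> a mod L" by (rule md_ne) (use Lk k3 in auto)
    then show ?thesis unfolding Bm2_def A_def by auto
  qed
  define S where "S = {A, Bm}"
  have lt: "a mod L < L" "(a + 1) mod L < L" "(a + (k - 1)) mod L < L" "(a + (k - 2)) mod L < L"
    using L0 by auto
  have Sc: "S \<in> configs L" unfolding S_def A_def Bm_def using pair_configs lt by auto
  have eq: "(\<Sum>T\<in>configs L. G {} T * hubbard L U T S) = (\<Sum>T\<in>configs L. hubbard L U {} T * G T S)"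
    by (rule comm_eq[OF comm empty_configs Sc])
  have rhs: "(\<Sum>T\<in>configs L. hubbard L U {} T * G T S) = hubbard L U {} {} * G {} S"
    using sumL[OF L2 empty_configs, of U G S] Hop_empty by simp
  have adjAA1: "adjm L A A1" unfolding A_def A1_def using adj_R[OF L0] by simp
  have adjBmBm2: "adjm L Bm Bm2" unfolding eBm Bm2_def using adj_L[OF L0, of "a + (k - 2)" \<sigma>] .
  define T1 where "T1 = {A1, Bm}"
  define T2 where "T2 = {A, Bm2}"
  have T1e: "T1 = insert A1 (S - {A})" unfolding T1_def S_def using dABm by auto
  have T2e: "T2 = insert Bm2 (S - {Bm})" unfolding T2_def S_def using dABm by auto
  have lhs: "(\<Sum>T\<in>configs L. G {} T * hubbard L U T S)
      = G {} S * hubbard L U S S + ((if 3 \<le> k then G {} T1 * hubbard L U T1 S else 0)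
         + (if 3 \<le> k then G {} T2 * hubbard L U T2 S else 0))"
  proof -
    have "(\<Sum>T\<in>configs L. G {} T * hubbard L U T S) = G {} S * hubbard L U S S + (\<Sum>T\<in>Hop L S. G {} T * hubbard L U T S)"
      using sumR[OF L2 Sc, of G "{}" U] by simp
    also have "(\<Sum>T\<in>Hop L S. G {} T * hubbard L U T S) = (if 3 \<le> k then G {} T1 * hubbard L U T1 S else 0)
         + (if 3 \<le> k then G {} T2 * hubbard L U T2 S else 0)"
    proof (rule sum_pick2[OF Hop_finite[OF Sc]])
      have "A \<in> T2" "A \<notin> T1" unfolding T1_def T2_def using dAA1 dABm by auto
      then show "T1 \<noteq> T2" by blast
      show "3 \<le> k \<Longrightarrow> T1 \<in> Hop L S" unfolding T1e
        by (rule HopI) (use adjAA1 dAA1 k3c in \<open>auto simp: S_def\<close>)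
      show "3 \<le> k \<Longrightarrow> T2 \<in> Hop L S" unfolding T2e
        by (rule HopI) (use adjBmBm2 dBm2Bm k3d in \<open>auto simp: S_def\<close>)
    next
      fix T assume T: "T \<in> Hop L S" and ne: "G {} T * hubbard L U T S \<noteq> 0"
      then obtain m m' where mm: "m \<in> S" "m' \<notin> S" "adjm L m m'" "T = insert m' (S - {m})"
        unfolding Hop_def by auto
      have Tc: "T \<in> configs L" using T Hop_configs[OF Sc] by auto
      have G0: "G {} T \<noteq> 0" using ne by auto
      have m'T: "m' \<in> T" using mm by auto
      show "(T = T1 \<and> 3 \<le> k) \<or> (T = T2 \<and> 3 \<le> k)"
      proof (cases "m = A")
        case True
        have "m' = A1 \<or> m' = ((a + (L - 1)) mod L, \<sigma>)"
          using adj_cases[OF L0] mm(3) True unfolding A_def A1_def by blast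
        moreover have "m' \<noteq> ((a + (L - 1)) mod L, \<sigma>)"
        proof
          assume e: "m' = ((a + (L - 1)) mod L, \<sigma>)"
          have BT: "Bm \<in> T" using mm True dABm by (auto simp: S_def)
          have eB: "(((a + (L - 1)) + k) mod L, \<sigma>) = Bm"
            using modshift[of a "k - 1"] Lk unfolding Bm_def by simp
          have "G {} T = 0"
            by (rule far1[OF empty_configs Tc, of k "a + (L - 1)"])
               (use Lk BT m'T e eB in simp_all)
          then show False using G0 by simp
        qed
        ultimately have "m' = A1" by simp
        moreover have "A1 \<noteq> Bm" using mm \<open>m' = A1\<close> by (auto simp: S_def)
        ultimately show ?thesis using True mm T1e k3a by auto
      next
        case False
        then have mB: "m = Bm" using mm(1) unfolding S_def by auto
        have c: "m' = ((a + (k - 1) + 1) mod L, \<sigma>) \<or> m' = ((a + (k - 1) + (L - 1)) mod L, \<sigma>)"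
          using adj_cases[OF L0, of "a + (k - 1)" \<sigma> m'] mm(3) mB unfolding Bm_def by simp
        have ms: "((a + (k - 1) + (L - 1)) mod L, \<sigma>) = Bm2"
          using modshift2[of "k - 1" a] Lk unfolding Bm2_def by (simp add: numeral_2_eq_2)
        have "m' = ((a + (k - 1) + 1) mod L, \<sigma>) \<or> m' = Bm2" using c unfolding ms .
        moreover have "m' \<noteq> ((a + (k - 1) + 1) mod L, \<sigma>)"
        proof
          assume e: "m' = ((a + (k - 1) + 1) mod L, \<sigma>)"
          have AT: "A \<in> T" using mm mB dABm by (auto simp: S_def)
          have eA: "(a mod L, \<sigma>) = A" unfolding A_def by simp
          have em: "((a + k) mod L, \<sigma>) = m'" using e Lk by simp
          have "G {} T = 0"
            by (rule far1[OF empty_configs Tc, of k a])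
               (use Lk AT m'T eA em in simp_all)
          then show False using G0 by simp
        qed
        ultimately have "m' = Bm2" by simp
        moreover have "Bm2 \<noteq> A" using mm \<open>m' = Bm2\<close> by (auto simp: S_def)
        ultimately show ?thesis using mB mm T2e k3b by auto
      qed
    qed
    finally show ?thesis .
  qed
  have dpair: "hubbard L U S S = hubbard L U {} {} - 4 * complex_of_real U"
    unfolding S_def A_def Bm_def by (rule diag_pair[OF L2 lt(1,3) n2[symmetric]])
  have GS: "G {} S = phi G \<sigma> (a mod L) ((a + (k - 1)) mod L) * sg (a mod L) ((a + (k - 1)) mod L)"
    unfolding S_def A_def Bm_def by (rule G_phi)
  have v1: "3 \<le> k \<Longrightarrow> G {} T1 * hubbard L U T1 S
      = -2 * sg (a mod L) ((a + (k - 1)) mod L) * phi G \<sigma> ((a + 1) mod L) ((a + (k - 1)) mod L)"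
  proof -
    assume k3: "3 \<le> k"
    have ne: "(a + 1) mod L \<noteq> (a + (k - 1)) mod L" using k3c[OF k3] unfolding A1_def Bm_def by simp
    show ?thesis unfolding T1_def S_def A_def A1_def Bm_def
      by (rule C1[OF L2 lt(1,3,2)]) (use n2 ne adj_R[OF L0] in auto)
  qed
  have v2: "3 \<le> k \<Longrightarrow> G {} T2 * hubbard L U T2 S
      = -2 * sg (a mod L) ((a + (k - 1)) mod L) * phi G \<sigma> (a mod L) ((a + (k - 2)) mod L)"
  proof -
    assume k3: "3 \<le> k"
    have ne: "(a + (k - 2)) mod L \<noteq> a mod L" using k3d[OF k3] unfolding Bm2_def A_def by simp
    have "T2 = {((a + (k - 2)) mod L, \<sigma>), (a mod L, \<sigma>)}" "S = {((a + (k - 1)) mod L, \<sigma>), (a mod L, \<sigma>)}"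
      unfolding T2_def S_def A_def Bm2_def Bm_def by auto
    moreover have "G {} {((a + (k - 2)) mod L, \<sigma>), (a mod L, \<sigma>)} * hubbard L U {((a + (k - 2)) mod L, \<sigma>), (a mod L, \<sigma>)} {((a + (k - 1)) mod L, \<sigma>), (a mod L, \<sigma>)}
       = -2 * sg ((a + (k - 1)) mod L) (a mod L) * phi G \<sigma> ((a + (k - 2)) mod L) (a mod L)"
      by (rule C1[OF L2 lt(3,1,4)]) (use n2 ne adjBmBm2 in \<open>auto simp: Bm_def Bm2_def\<close>)
    ultimately show ?thesis using sg_swap[OF n2[symmetric]] phi_swap[OF ne[symmetric], of G \<sigma>] by simp
  qed
  let ?p = "phi G \<sigma> (a mod L) ((a + (k - 1)) mod L)"
  let ?s = "sg (a mod L) ((a + (k - 1)) mod L)"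
  let ?R = "(if 3 \<le> k then 2 * (phi G \<sigma> ((a + 1) mod L) ((a + (k - 1)) mod L)
                      + phi G \<sigma> (a mod L) ((a + (k - 2)) mod L)) else 0)"
  have e1: "G {} S * hubbard L U S S + ((if 3 \<le> k then G {} T1 * hubbard L U T1 S else 0)
         + (if 3 \<le> k then G {} T2 * hubbard L U T2 S else 0)) = hubbard L U {} {} * G {} S"
    using eq lhs rhs by simp
  have "?s * (-4 * complex_of_real U * ?p - ?R) = 0"
  proof (cases "3 \<le> k")
    case True
    have "G {} S * (hubbard L U {} {} - 4 * complex_of_real U) + (G {} T1 * hubbard L U T1 S + G {} T2 * hubbard L U T2 S)
       = hubbard L U {} {} * G {} S" using e1 True dpair by simp
    then have h: "phi G \<sigma> (a mod L) ((a + (k - 1)) mod L) * sg (a mod L) ((a + (k - 1)) mod L) * (hubbard L U {} {} - 4 * complex_of_real U)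
      + (-2 * sg (a mod L) ((a + (k - 1)) mod L) * phi G \<sigma> ((a + 1) mod L) ((a + (k - 1)) mod L)
         + -2 * sg (a mod L) ((a + (k - 1)) mod L) * phi G \<sigma> (a mod L) ((a + (k - 2)) mod L))
      = hubbard L U {} {} * (phi G \<sigma> (a mod L) ((a + (k - 1)) mod L) * sg (a mod L) ((a + (k - 1)) mod L))"
      unfolding GS v1[OF True] v2[OF True] .
    have R: "?R = 2 * (phi G \<sigma> ((a + 1) mod L) ((a + (k - 1)) mod L)
                      + phi G \<sigma> (a mod L) ((a + (k - 2)) mod L))" using True by simp
    show ?thesis unfolding R using h by algebra
  next
    case False
    have "G {} S * (hubbard L U {} {} - 4 * complex_of_real U) = hubbard L U {} {} * G {} S"
      using e1 False dpair by simp
    then have h: "phi G \<sigma> (a mod L) ((a + (k - 1)) mod L) * sg (a mod L) ((a + (k - 1)) mod L) * (hubbard L U {} {} - 4 * complex_of_real U)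
      = hubbard L U {} {} * (phi G \<sigma> (a mod L) ((a + (k - 1)) mod L) * sg (a mod L) ((a + (k - 1)) mod L))"
      unfolding GS .
    have R: "?R = 0" using False by simp
    show ?thesis unfolding R using h by algebra
  qed
  moreover have "?s \<noteq> 0" unfolding sg_def by simp
  ultimately show ?thesis by simp
qed

end

lemma alt_zero:
  fixes M N :: "nat \<Rightarrow> complex" and c :: complex
  assumes L: "0 < L" and c: "c \<noteq> 0" and alt: "\<And>a. M (Suc a) = - M a"
    and perM: "\<And>a. M (a + L) = M a" and perN: "\<And>a. N (a + L) = N a"
    and rel: "\<And>a. c * M a = (if b then 2 * (N (Suc a) + N a) else 0)"
  shows "M a = 0"
proof -
  have pw: "M n = (-1) ^ n * M 0" for n by (induction n) (auto simp: alt)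
  have M0: "M 0 = 0"
  proof (cases b)
    case False
    then show ?thesis using rel[of 0] c by simp
  next
    case True
    show ?thesis
    proof (cases "even L")
      case False
      have "M L = M 0" using perM[of 0] by simp
      then have "- M 0 = M 0" using pw[of L] False by simp
      then show ?thesis by simp
    next
      case ev: True
      have "(\<Sum>a<L. (-1) ^ a * (c * M a)) = (\<Sum>a<L. c * M 0)"
      proof (rule sum.cong[OF refl])
        fix a
        have sq: "(-1::complex) ^ a * (-1) ^ a = 1" by (simp add: power_mult_distrib[symmetric])
        have "(-1) ^ a * (c * M a) = c * M 0 * ((-1) ^ a * (-1) ^ a)" unfolding pw[of a] by (simp only: ac_simps)
        then show "(-1) ^ a * (c * M a) = c * M 0" unfolding sq by simp
      qed
      also have "\<dots> = of_nat L * c * M 0" by simp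
      finally have l: "(\<Sum>a<L. (-1) ^ a * (c * M a)) = of_nat L * c * M 0" .
      define g where "g a = (-1) ^ a * N a" for a
      have "(\<Sum>a<L. (-1) ^ a * (c * M a)) = (\<Sum>a<L. 2 * (g a - g (Suc a)))"
      proof (rule sum.cong[OF refl])
        fix a
        have "(-1) ^ a * (c * M a) = (-1) ^ a * (2 * (N (Suc a) + N a))" using rel[of a] True by simp
        also have "\<dots> = 2 * (g a - g (Suc a))" unfolding g_def by (simp add: ring_distribs)
        finally show "(-1) ^ a * (c * M a) = 2 * (g a - g (Suc a))" .
      qed
      also have "\<dots> = 2 * (\<Sum>a<L. g a - g (Suc a))" by (simp add: sum_distrib_left)
      also have "\<dots> = 2 * (g 0 - g L)" by (simp add: sum_lessThan_telescope')
      also have "\<dots> = 0" unfolding g_def using ev perN[of 0] by simp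
      finally have "of_nat L * c * M 0 = 0" using l by simp
      then show ?thesis using L c by simp
    qed
  qed
  show ?thesis using pw[of a] M0 by simp
qed

context CQ
begin

lemma vacuum_zero:
  assumes U: "U \<noteq> 0"
  shows "G {} {(a mod L, \<sigma>), ((a + (k - 1)) mod L, \<sigma>)} = 0"
proof -
  define M where "M a = phi G \<sigma> (a mod L) ((a + (k - 1)) mod L)" for a
  define N where "N a = phi G \<sigma> (a mod L) ((a + (k - 2)) mod L)" for a
  have alt: "M (Suc a) = - M a" for a
  proof -
    have "Suc a + (k - 1) = a + k" using Lk by simp
    then have "M (Suc a) = phi G \<sigma> ((a + 1) mod L) ((a + k) mod L)" unfolding M_def by simp
    then show ?thesis using E_far[of a] unfolding M_def by (simp add: eq_neg_iff_add_eq_0)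
  qed
  have perM: "M (a + L) = M a" for a
  proof -
    have "a + L + (k - 1) = (a + (k - 1)) + L" by simp
    then show ?thesis unfolding M_def by (metis mod_add_self2)
  qed
  have perN: "N (a + L) = N a" for a
  proof -
    have "a + L + (k - 2) = (a + (k - 2)) + L" by simp
    then show ?thesis unfolding N_def by (metis mod_add_self2)
  qed
  have rel: "(-4 * complex_of_real U) * M a = (if 3 \<le> k then 2 * (N (Suc a) + N a) else 0)" for a
  proof -
    have e: "Suc a + (k - 2) = a + (k - 1)" using Lk by simp
    have nS: "N (Suc a) = phi G \<sigma> ((a + 1) mod L) ((a + (k - 1)) mod L)" unfolding N_def e by simp
    show ?thesis unfolding nS unfolding M_def N_def using E_near[of a] by simp
  qed
  have c: "-4 * complex_of_real U \<noteq> 0" using U by simp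
  have "M a = 0" by (rule alt_zero[OF L0 c alt perM perN rel])
  then show ?thesis using G_phi[of G "a mod L" \<sigma> "(a + (k - 1)) mod L"] unfolding M_def by simp
qed

end

lemma site_ne:
  fixes a p q L :: nat
  assumes "p < q" "q - p < L"
  shows "(a + q) mod L \<noteq> (a + p) mod L"
proof -
  have "(a + p + (q - p)) mod L \<noteq> (a + p) mod L" by (rule md_ne) (use assms in auto)
  moreover have "a + p + (q - p) = a + q" using assms by simp
  ultimately show ?thesis by simp
qed

lemma site_eq:
  fixes a p q L :: nat
  assumes "(a + q) mod L = (a + p) mod L" "p < L" "q < L"
  shows "p = q"
proof (rule ccontr)
  assume "p \<noteq> q"
  then have "p < q \<or> q < p" by auto
  then show False
  proof
    assume pq: "p < q"
    have "q - p < L" using assms by linarith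
    then show False using site_ne[OF pq, of L a] assms by auto
  next
    assume pq: "q < p"
    have "p - q < L" using assms by linarith
    then show False using site_ne[OF pq, of L a] assms by auto
  qed
qed

context CQ
begin

definition A0 :: "nat \<Rightarrow> mode set" where
  "A0 a = {((a + p) mod L, \<tau>) | p \<tau>. p < k \<and> (\<tau> = \<sigma> \<longrightarrow> p + 1 < k)}"

lemma A0_far:
  assumes "j < k"
  shows "((a + j + k) mod L, \<sigma>) \<notin> A0 a"
proof
  assume "((a + j + k) mod L, \<sigma>) \<in> A0 a"
  then obtain p where p: "p < k" "(a + j + k) mod L = (a + p) mod L" unfolding A0_def by auto
  have "(a + (j + k)) mod L \<noteq> (a + p) mod L" by (rule site_ne) (use p assms Lk in auto)
  then show False using p by (simp add: add.assoc)
qed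

lemma A0_win:
  "A0 a \<inter> win L k (a + k) = {}"
proof (rule equals0I)
  fix m assume "m \<in> A0 a \<inter> win L k (a + k)"
  then have m1: "m \<in> A0 a" and m2: "m \<in> win L k (a + k)" by auto
  from m1 obtain p \<tau> where p: "p < k" "m = ((a + p) mod L, \<tau>)" unfolding A0_def by auto
  from m2 obtain q \<tau>' where q: "q < k" "m = ((a + k + q) mod L, \<tau>')" unfolding win_def by auto
  have e: "(a + (k + q)) mod L = (a + p) mod L" using p q by (simp add: add.assoc)
  have "(a + (k + q)) mod L \<noteq> (a + p) mod L" by (rule site_ne) (use p q Lk in auto)
  then show False using e by simp
qed

lemma A0_step:
  assumes Y: "Y \<in> configs L" "Y \<subseteq> A0 a" and j: "j < k"
    and n1: "((a + j) mod L, \<sigma>) \<notin> Y"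
  shows "tau L k \<sigma> (a + j) Y \<in> configs L \<and> tau L k \<sigma> (a + j) Y \<subseteq> A0 a
       \<and> ((a + j + 1) mod L, \<sigma>) \<notin> tau L k \<sigma> (a + j) Y
       \<and> ((a + j + k) mod L, \<sigma>) \<notin> tau L k \<sigma> (a + j) Y"
proof -
  have nB: "((a + j + k) mod L, \<sigma>) \<notin> Y" using A0_far[OF j] Y by auto
  then have t0: "tau0 L k \<sigma> (a + j) Y = Y" unfolding tau0_def by simp
  have ne01: "(a + j + 1) mod L \<noteq> (a + j) mod L" by (rule md_ne) (use L2 in auto)
  have ne0k: "(a + j + k) mod L \<noteq> (a + j) mod L" by (rule md_ne) (use Lk in auto)
  show ?thesis
  proof (cases "((a + j + 1) mod L, \<sigma>) \<in> Y")
    case True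
    then have te: "tau L k \<sigma> (a + j) Y = insert ((a + j) mod L, \<sigma>) (Y - {((a + j + 1) mod L, \<sigma>)})"
      unfolding tau_def t0 by (simp add: Let_def)
    obtain p where p: "p < k" "p + 1 < k" "(a + (j + 1)) mod L = (a + p) mod L"
      using True Y(2) unfolding A0_def by (auto simp: add.assoc)
    have "p = j + 1" by (rule site_eq[OF p(3)]) (use p j Lk in auto)
    then have jin: "((a + j) mod L, \<sigma>) \<in> A0 a" unfolding A0_def using p by auto
    have c: "insert ((a + j) mod L, \<sigma>) (Y - {((a + j + 1) mod L, \<sigma>)}) \<in> configs L"
      using Y(1) L0 unfolding configs_def modes_def by auto
    show ?thesis unfolding te using c jin Y(2) ne01 ne0k nB by auto
  next
    case False
    then have te: "tau L k \<sigma> (a + j) Y = Y" unfolding tau_def t0 by (simp add: Let_def)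
    show ?thesis unfolding te using False Y nB by auto
  qed
qed

lemma main_claim:
  assumes U: "U \<noteq> 0"
    and LOC: "\<And>a X. X \<in> configs L \<Longrightarrow> (a mod L, \<sigma>) \<notin> X \<Longrightarrow> ((a + (k - 1)) mod L, \<sigma>) \<notin> X \<Longrightarrow>
        (G X (insert (a mod L, \<sigma>) (insert ((a + (k - 1)) mod L, \<sigma>) X)) = 0
        \<longleftrightarrow> G (X \<inter> win L k a) (insert (a mod L, \<sigma>) (insert ((a + (k - 1)) mod L, \<sigma>) (X \<inter> win L k a))) = 0)"
    and X: "X \<in> configs L" "(a mod L, \<sigma>) \<notin> X" "((a + (k - 1)) mod L, \<sigma>) \<notin> X"
  shows "G X (insert (a mod L, \<sigma>) (insert ((a + (k - 1)) mod L, \<sigma>) X)) = 0"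
proof -
  define X1 where "X1 = X \<inter> win L k a"
  define P0 where "P0 = (G X1 (insert (a mod L, \<sigma>) (insert ((a + (k - 1)) mod L, \<sigma>) X1)) = 0)"
  have X1c: "X1 \<in> configs L" using X unfolding X1_def configs_def by auto
  have X1A0: "X1 \<subseteq> A0 a"
  proof
    fix m assume m: "m \<in> X1"
    then obtain p \<tau> where p: "p < k" "m = ((a + p) mod L, \<tau>)" unfolding X1_def win_def by auto
    have "\<tau> = \<sigma> \<longrightarrow> p + 1 < k"
    proof
      assume t: "\<tau> = \<sigma>"
      show "p + 1 < k"
      proof (rule ccontr)
        assume "\<not> p + 1 < k"
        then have "p = k - 1" using p by simp
        then show False using m p t X(3) unfolding X1_def by auto
      qed
    qed
    then show "m \<in> A0 a" unfolding A0_def using p by auto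
  qed
  have ind: "\<exists>Y. Y \<in> configs L \<and> Y \<subseteq> A0 a \<and> ((a + j) mod L, \<sigma>) \<notin> Y
      \<and> ((a + j + (k - 1)) mod L, \<sigma>) \<notin> Y
      \<and> (P0 \<longleftrightarrow> G Y (insert ((a + j) mod L, \<sigma>) (insert ((a + j + (k - 1)) mod L, \<sigma>) Y)) = 0)"
    if "j \<le> k" for j
    using that
  proof (induction j)
    case 0
    show ?case
      by (rule exI[of _ X1]) (use X1c X1A0 X in \<open>auto simp: X1_def P0_def\<close>)
  next
    case (Suc j)
    then obtain Y where Y: "Y \<in> configs L" "Y \<subseteq> A0 a" "((a + j) mod L, \<sigma>) \<notin> Y"
      "((a + j + (k - 1)) mod L, \<sigma>) \<notin> Y"
      "P0 \<longleftrightarrow> G Y (insert ((a + j) mod L, \<sigma>) (insert ((a + j + (k - 1)) mod L, \<sigma>) Y)) = 0"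
      by auto
    have j: "j < k" using Suc by simp
    have st: "G Y (insert ((a + j) mod L, \<sigma>) (insert ((a + j + (k - 1)) mod L, \<sigma>) Y)) = 0
     \<longleftrightarrow> G (tau L k \<sigma> (a + j) Y) (insert ((a + j + 1) mod L, \<sigma>) (insert ((a + j + k) mod L, \<sigma>) (tau L k \<sigma> (a + j) Y))) = 0"
      using chain_step[OF Lk SPG comm Y(1) Y(3) Y(4)] .
    have ek: "a + Suc j + (k - 1) = a + j + k" using Lk by simp
    show ?case
      by (rule exI[of _ "tau L k \<sigma> (a + j) Y"])
         (use A0_step[OF Y(1,2) j Y(3)] st Y(5) ek in simp)
  qed
  obtain Y where Y: "Y \<in> configs L" "Y \<subseteq> A0 a" "((a + k) mod L, \<sigma>) \<notin> Y"
      "((a + k + (k - 1)) mod L, \<sigma>) \<notin> Y"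
      "P0 \<longleftrightarrow> G Y (insert ((a + k) mod L, \<sigma>) (insert ((a + k + (k - 1)) mod L, \<sigma>) Y)) = 0"
    using ind[of k] by auto
  have Yw: "Y \<inter> win L k (a + k) = {}" using Y(2) A0_win by auto
  have "G Y (insert ((a + k) mod L, \<sigma>) (insert ((a + k + (k - 1)) mod L, \<sigma>) Y)) = 0"
    using LOC[OF Y(1) Y(3) Y(4)] Yw vacuum_zero[OF U, of "a + k"] by simp
  then have P0 using Y(5) by simp
  then show ?thesis using LOC[OF X] unfolding P0_def X1_def by simp
qed

end

lemma letter_UNIV: "(UNIV :: letter set) = {LC, LCd, LZ, LI}"
  by (auto intro: letter.exhaust)

lemma bw_finite: "finite (basis_words k)"
proof -
  let ?dec = "\<lambda>xs :: letter list. (\<lambda>p \<tau>. if p < k then xs ! (2 * p + (if \<tau> then 0 else 1)) else LI)"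
  have fl: "finite {xs :: letter list. set xs \<subseteq> UNIV \<and> length xs = 2 * k}"
    by (rule finite_lists_length_eq) (simp add: letter_UNIV)
  have "basis_words k \<subseteq> ?dec ` {xs :: letter list. set xs \<subseteq> UNIV \<and> length xs = 2 * k}"
  proof
    fix f assume f: "f \<in> basis_words k"
    let ?xs = "map (\<lambda>i. f (i div 2) (even i)) [0..<2 * k]"
    have "?dec ?xs = f"
    proof (intro ext)
      fix p \<tau>
      show "?dec ?xs p \<tau> = f p \<tau>"
      proof (cases "p < k")
        case True
        then have lt: "2 * p + (if \<tau> then 0 else 1) < 2 * k" by auto
        have "?xs ! (2 * p + (if \<tau> then 0 else 1)) = f ((2 * p + (if \<tau> then 0 else 1)) div 2) (even (2 * p + (if \<tau> then 0 else 1)))"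
          using lt by simp
        also have "\<dots> = f p \<tau>" by (cases \<tau>) auto
        finally show ?thesis using True by simp
      next
        case False
        then show ?thesis using f unfolding basis_words_def by auto
      qed
    qed
    then have ee: "f = ?dec ?xs" by simp
    have xin: "?xs \<in> {xs :: letter list. set xs \<subseteq> UNIV \<and> length xs = 2 * k}" by simp
    show "f \<in> ?dec ` {xs :: letter list. set xs \<subseteq> UNIV \<and> length xs = 2 * k}"
      by (rule image_eqI[where x="?xs"]) (rule ee, rule xin)
  qed
  then show ?thesis using fl finite_subset by blast
qed

lemma hadamard0:
  assumes "finite M0" "Z \<subseteq> M0" "Z \<noteq> {}"
  shows "(\<Sum>X\<in>Pow M0. \<Prod>m\<in>Z. zv m X) = 0"
proof -
  obtain m0 where m0: "m0 \<in> Z" using assms by auto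
  define M1 where "M1 = M0 - {m0}"
  have M0e: "M0 = insert m0 M1" and nm: "m0 \<notin> M1" using m0 assms unfolding M1_def by auto
  have f1: "finite M1" using assms unfolding M1_def by auto
  have fZ: "finite Z" using assms finite_subset by auto
  have Pe: "Pow M0 = Pow M1 \<union> insert m0 ` Pow M1" unfolding M0e by (rule Pow_insert)
  have disj: "Pow M1 \<inter> insert m0 ` Pow M1 = {}" using nm by auto
  have inj: "inj_on (insert m0) (Pow M1)"
  proof (rule inj_onI)
    fix x y assume x: "x \<in> Pow M1" and y: "y \<in> Pow M1" and e: "insert m0 x = insert m0 y"
    have "m0 \<notin> x" "m0 \<notin> y" using x y nm by auto
    then show "x = y" using e by (metis Diff_insert_absorb)
  qed
  have flip: "(\<Prod>m\<in>Z. zv m (insert m0 X)) = - (\<Prod>m\<in>Z. zv m X)" if X: "X \<in> Pow M1" for X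
  proof -
    have m0X: "m0 \<notin> X" using X nm by auto
    have "(\<Prod>m\<in>Z. zv m (insert m0 X)) = zv m0 (insert m0 X) * (\<Prod>m\<in>Z - {m0}. zv m (insert m0 X))"
      using fZ m0 by (simp add: prod.remove)
    also have "(\<Prod>m\<in>Z - {m0}. zv m (insert m0 X)) = (\<Prod>m\<in>Z - {m0}. zv m X)"
      by (rule prod.cong) (auto simp: zv_def)
    also have "(\<Prod>m\<in>Z. zv m X) = zv m0 X * (\<Prod>m\<in>Z - {m0}. zv m X)"
      using fZ m0 by (simp add: prod.remove)
    ultimately show ?thesis using m0X by (simp add: zv_def)
  qed
  have "(\<Sum>X\<in>Pow M0. \<Prod>m\<in>Z. zv m X) = (\<Sum>X\<in>Pow M1. \<Prod>m\<in>Z. zv m X) + (\<Sum>X\<in>insert m0 ` Pow M1. \<Prod>m\<in>Z. zv m X)"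
    unfolding Pe using f1 disj by (simp add: sum.union_disjoint)
  also have "(\<Sum>X\<in>insert m0 ` Pow M1. \<Prod>m\<in>Z. zv m X) = (\<Sum>X\<in>Pow M1. \<Prod>m\<in>Z. zv m (insert m0 X))"
    by (rule sum.reindex[OF inj, unfolded comp_def])
  also have "\<dots> = (\<Sum>X\<in>Pow M1. - (\<Prod>m\<in>Z. zv m X))"
    by (rule sum.cong) (auto simp: flip)
  finally show ?thesis by (simp add: sum_negf)
qed

lemma list_all2_wl:
  assumes "\<And>p \<tau>. p < l \<Longrightarrow> R (g p \<tau>) (h p \<tau>)"
  shows "list_all2 (\<lambda>x y. snd y = snd x \<and> R (fst x) (fst y)) (wl L l i g) (wl L l i h)"
  unfolding wl_def
  by (rule list_all2_appendI) (auto simp: list_all2_map1 list_all2_map2 list_all2_same assms)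

locale FQ =
  fixes L k :: nat and coef :: "nat \<Rightarrow> nat \<Rightarrow> (nat \<Rightarrow> bool \<Rightarrow> letter) \<Rightarrow> complex"
    and a :: nat and \<sigma> d :: bool
  assumes Lk: "2 * k + 2 \<le> L" "2 \<le> k" and a: "a < L"
begin

definition A where "A = (a, \<sigma>)"
definition Bm where "Bm = ((a + (k - 1)) mod L, \<sigma>)"
definition ltr where "ltr = (if d then LCd else LC)"
definition src where "src X = (if d then X else insert A (insert Bm X))"
definition tgt where "tgt X = (if d then insert A (insert Bm X) else X)"
definition ew where "ew = end_word k \<sigma> d"
definition patt where "patt f \<longleftrightarrow> (\<forall>p \<tau>. k \<le> p \<longrightarrow> f p \<tau> = LI) \<and> f 0 \<sigma> = ltr \<and> f (k - 1) \<sigma> = ltr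
   \<and> (\<forall>p<k. \<forall>\<tau>. (p, \<tau>) \<noteq> (0, \<sigma>) \<and> (p, \<tau>) \<noteq> (k - 1, \<sigma>) \<longrightarrow> f p \<tau> = LZ \<or> f p \<tau> = LI)"
definition Zs where "Zs f = {m. (LZ, m) \<in> set (wl L k a f)}"

lemma L0: "0 < L" using Lk by simp

lemma modesAB: "A \<in> modes L" "Bm \<in> modes L"
  unfolding A_def Bm_def modes_def using a L0 by auto

lemma dABm: "A \<noteq> Bm"
proof -
  have "(a + (k - 1)) mod L \<noteq> a mod L" by (rule md_ne) (use Lk in auto)
  then show ?thesis unfolding A_def Bm_def using a by auto
qed

lemma win_A: "((a + p) mod L, \<tau>) = A \<longleftrightarrow> p = 0 \<and> \<tau> = \<sigma>" if "p < k" for p \<tau>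
proof
  assume e: "((a + p) mod L, \<tau>) = A"
  then have "(a + p) mod L = (a + 0) mod L" "\<tau> = \<sigma>" unfolding A_def using a by auto
  then show "p = 0 \<and> \<tau> = \<sigma>" using site_eq[of a p L 0] that Lk by auto
next
  assume "p = 0 \<and> \<tau> = \<sigma>" then show "((a + p) mod L, \<tau>) = A" unfolding A_def using a by simp
qed

lemma win_Bm: "((a + p) mod L, \<tau>) = Bm \<longleftrightarrow> p = k - 1 \<and> \<tau> = \<sigma>" if "p < k" for p \<tau>
proof
  assume e: "((a + p) mod L, \<tau>) = Bm"
  then have "(a + p) mod L = (a + (k - 1)) mod L" "\<tau> = \<sigma>" unfolding Bm_def by auto
  then show "p = k - 1 \<and> \<tau> = \<sigma>" using site_eq[of a p L "k - 1"] that Lk by auto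
next
  assume "p = k - 1 \<and> \<tau> = \<sigma>" then show "((a + p) mod L, \<tau>) = Bm" unfolding Bm_def by simp
qed

lemma srcc: "X \<in> configs L \<Longrightarrow> src X \<in> configs L"
  unfolding src_def using modesAB by (auto simp: configs_def)

lemma E1:
  assumes X: "X \<in> configs L" "A \<notin> X" "Bm \<notin> X"
    and l: "1 \<le> l" "l \<le> k" and i: "i < L" and f: "f \<in> basis_words l"
    and ne: "basis_elem L l i f (tgt X) (src X) \<noteq> 0"
  shows "l = k \<and> i = a \<and> patt f"
proof -
  obtain s where ls: "lapps (wl L l i f) (src X) = Some (tgt X, s)"
    using ne be_ent[OF L0 srcc[OF X(1)]] by (auto simp: ent_def split: option.splits if_splits)
  have dA: "(A \<in> tgt X) \<noteq> (A \<in> src X)" "(Bm \<in> tgt X) \<noteq> (Bm \<in> src X)"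
    using X dABm unfolding src_def tgt_def by auto
  have "A \<in> win L l i" "Bm \<in> win L l i" using lapps_wl_support[OF ls] dA by auto
  then have lk: "l = k \<and> i = a"
    using cover_ends[OF a i l(2) _ _, of \<sigma> \<sigma>] Lk unfolding A_def Bm_def by auto
  then have ls': "lapps (wl L k a f) (src X) = Some (tgt X, s)" using ls by simp
  have dist: "distinct (map snd (wl L k a f))" by (rule wl_distinct) (use Lk in auto)
  have letters: "(e = LC \<longrightarrow> m \<in> src X \<and> m \<notin> tgt X) \<and> (e = LCd \<longrightarrow> m \<notin> src X \<and> m \<in> tgt X)
         \<and> (e = LZ \<or> e = LI \<longrightarrow> (m \<in> tgt X \<longleftrightarrow> m \<in> src X))"
    if "(e, m) \<in> set (wl L k a f)" for e m
    using lapps_letters[OF dist ls' that] .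
  have inset: "(f p \<tau>, ((a + p) mod L, \<tau>)) \<in> set (wl L k a f)" if "p < k" for p \<tau>
    using wl_set that by blast
  have pA: "f 0 \<sigma> = ltr"
  proof -
    have m: "((a + 0) mod L, \<sigma>) = A" using win_A[of 0 \<sigma>] Lk by simp
    show ?thesis using letters[OF inset[of 0 \<sigma>]] Lk X unfolding m
      by (cases "f 0 \<sigma>") (auto simp: ltr_def src_def tgt_def split: if_splits)
  qed
  have pB: "f (k - 1) \<sigma> = ltr"
  proof -
    have m: "((a + (k - 1)) mod L, \<sigma>) = Bm" unfolding Bm_def by simp
    show ?thesis using letters[OF inset[of "k - 1" \<sigma>]] Lk X dABm unfolding m
      by (cases "f (k - 1) \<sigma>") (auto simp: ltr_def src_def tgt_def split: if_splits)
  qed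
  have pO: "f p \<tau> = LZ \<or> f p \<tau> = LI" if "p < k" "(p, \<tau>) \<noteq> (0, \<sigma>)" "(p, \<tau>) \<noteq> (k - 1, \<sigma>)" for p \<tau>
  proof -
    have nA: "((a + p) mod L, \<tau>) \<noteq> A" using win_A[OF that(1)] that by auto
    have nB: "((a + p) mod L, \<tau>) \<noteq> Bm" using win_Bm[OF that(1)] that by auto
    have eq: "(((a + p) mod L, \<tau>) \<in> tgt X) = (((a + p) mod L, \<tau>) \<in> src X)"
      using nA nB unfolding src_def tgt_def by auto
    show ?thesis using letters[OF inset[OF that(1), of \<tau>]] eq by (cases "f p \<tau>") auto
  qed
  have "\<forall>p \<tau>. k \<le> p \<longrightarrow> f p \<tau> = LI" using f lk unfolding basis_words_def by auto
  then have "patt f" unfolding patt_def using pA pB pO by blast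
  then show ?thesis using lk by simp
qed

lemma ew_bw: "ew \<in> basis_words k"
  unfolding ew_def end_word_def basis_words_def using Lk by auto

lemma ew_patt: "patt ew"
  unfolding patt_def ew_def end_word_def ltr_def using Lk by auto

lemma E2:
  assumes "patt f" and that: "X \<in> configs L"
  shows "basis_elem L k a f (tgt X) (src X) = basis_elem L k a ew (tgt X) (src X) * (\<Prod>m\<in>Zs f. zv m (src X))"
proof -
  have rel: "list_all2 (\<lambda>x y. snd y = snd x \<and> (fst y = fst x \<or> (fst x = LI \<and> fst y = LZ))) (wl L k a ew) (wl L k a f)"
  proof (rule list_all2_wl)
    fix p \<tau> assume p: "p < k"
    show "f p \<tau> = ew p \<tau> \<or> (ew p \<tau> = LI \<and> f p \<tau> = LZ)"
    proof (cases "(p, \<tau>) = (0, \<sigma>) \<or> (p, \<tau>) = (k - 1, \<sigma>)")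
      case True
      then show ?thesis using assms unfolding patt_def ew_def end_word_def ltr_def by auto
    next
      case False
      then have "f p \<tau> = LZ \<or> f p \<tau> = LI" using assms p unfolding patt_def by auto
      moreover have "ew p \<tau> = LI" using False unfolding ew_def end_word_def by auto
      ultimately show ?thesis by auto
    qed
  qed
  have dist: "distinct (map snd (wl L k a ew))" by (rule wl_distinct) (use Lk in auto)
  have noZ: "\<forall>x\<in>set (wl L k a ew). fst x \<noteq> LZ"
    unfolding wl_def ew_def end_word_def by (auto split: if_splits)
  have "lapps (wl L k a f) (src X) = map_option (\<lambda>(T, s). (T, s * (\<Prod>m\<in>Zs f. zv m (src X)))) (lapps (wl L k a ew) (src X))"
    using lapps_ZI[OF rel dist noZ] unfolding Zs_def .
  then show ?thesis unfolding be_ent[OF L0 srcc[OF that]]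
    by (auto simp: ent_def split: option.splits)
qed

lemma Eend:
  assumes X: "X \<in> configs L" "A \<notin> X" "Bm \<notin> X"
  shows "basis_elem L k a ew (tgt X) (src X) = 1 \<or> basis_elem L k a ew (tgt X) (src X) = -1"
proof -
  have dist: "distinct (map snd (wl L k a ew))" by (rule wl_distinct) (use Lk in auto)
  have mem: "(e, m) \<in> set (wl L k a ew) \<longleftrightarrow> (\<exists>p \<tau>. p < k \<and> m = ((a + p) mod L, \<tau>) \<and> e = ew p \<tau>)" for e m
    by (rule wl_set)
  have cset: "{m. (ltr, m) \<in> set (wl L k a ew)} = {A, Bm}"
  proof
    show "{m. (ltr, m) \<in> set (wl L k a ew)} \<subseteq> {A, Bm}"
    proof
      fix m assume "m \<in> {m. (ltr, m) \<in> set (wl L k a ew)}"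
      then obtain p \<tau> where p: "p < k" "m = ((a + p) mod L, \<tau>)" "ltr = ew p \<tau>" using mem by auto
      then have "\<tau> = \<sigma> \<and> (p = 0 \<or> p = k - 1)" unfolding ew_def end_word_def ltr_def
        by (auto split: if_splits)
      then show "m \<in> {A, Bm}" using p win_A win_Bm by auto
    qed
  next
    have "(ltr, A) \<in> set (wl L k a ew)" using mem[of ltr A] win_A[of 0 \<sigma>] Lk
      unfolding ew_def end_word_def ltr_def by (auto intro!: exI[of _ 0])
    moreover have "(ltr, Bm) \<in> set (wl L k a ew)" using mem[of ltr Bm] win_Bm[of "k - 1" \<sigma>] Lk
      unfolding ew_def end_word_def ltr_def by (auto intro!: exI[of _ "k - 1"])
    ultimately show "{A, Bm} \<subseteq> {m. (ltr, m) \<in> set (wl L k a ew)}" by auto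
  qed
  have oset: "{m. (e, m) \<in> set (wl L k a ew)} = {}" if "e \<noteq> ltr" "e = LC \<or> e = LCd" for e
    using mem that unfolding ew_def end_word_def ltr_def by (auto split: if_splits)
  have c1: "m \<in> src X" if "(LC, m) \<in> set (wl L k a ew)" for m
  proof (cases d)
    case True
    have "m \<in> {m. (LC, m) \<in> set (wl L k a ew)}" using that by simp
    moreover have "{m. (LC, m) \<in> set (wl L k a ew)} = {}" proof (rule oset)
      show "LC \<noteq> ltr" using True unfolding ltr_def by simp
    qed simp
    ultimately show ?thesis by blast
  next
    case False
    then have "m \<in> {A, Bm}" using cset that unfolding ltr_def by auto
    then show ?thesis using False unfolding src_def by auto
  qed
  have c2: "m \<notin> src X" if "(LCd, m) \<in> set (wl L k a ew)" for m
  proof (cases d)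
    case True
    then have "m \<in> {A, Bm}" using cset that unfolding ltr_def by auto
    then show ?thesis using True X unfolding src_def by auto
  next
    case False
    have "m \<in> {m. (LCd, m) \<in> set (wl L k a ew)}" using that by simp
    moreover have "{m. (LCd, m) \<in> set (wl L k a ew)} = {}" proof (rule oset)
      show "LCd \<noteq> ltr" using False unfolding ltr_def by simp
    qed simp
    ultimately show ?thesis by blast
  qed
  have pre: "\<forall>(e, m)\<in>set (wl L k a ew). (e = LC \<longrightarrow> m \<in> src X) \<and> (e = LCd \<longrightarrow> m \<notin> src X)"
    using c1 c2 by auto
  obtain s where ls: "lapps (wl L k a ew) (src X) = Some ((src X - {m. (LC, m) \<in> set (wl L k a ew)}) \<union> {m. (LCd, m) \<in> set (wl L k a ew)}, s)"
    using lapps_exists[OF dist pre] by auto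
  have "(src X - {m. (LC, m) \<in> set (wl L k a ew)}) \<union> {m. (LCd, m) \<in> set (wl L k a ew)} = tgt X"
  proof (cases d)
    case True
    then show ?thesis using cset oset[of LC] unfolding ltr_def src_def tgt_def by auto
  next
    case False
    then show ?thesis using cset oset[of LCd] X dABm unfolding ltr_def src_def tgt_def by auto
  qed
  then have ls2: "lapps (wl L k a ew) (src X) = Some (tgt X, s)" using ls by simp
  show ?thesis unfolding be_ent[OF L0 srcc[OF X(1)]] ls2 using lapps_sign[OF ls2] by (auto simp: ent_def)
qed

end

context FQ
begin

definition Phi where
  "Phi X = (\<Sum>f\<in>basis_words k. (if patt f then coef k a f * (\<Prod>m\<in>Zs f. zv m (src X)) else 0))"

lemma Fval:
  assumes X: "X \<in> configs L" "A \<notin> X" "Bm \<notin> X"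
  shows "local_op L k coef (tgt X) (src X) = basis_elem L k a ew (tgt X) (src X) * Phi X"
proof -
  define g where "g l i = (\<Sum>f\<in>basis_words l. coef l i f * basis_elem L l i f (tgt X) (src X))" for l i
  have g0: "g l i = 0" if "l \<in> {1..k}" "i < L" "\<not> (l = k \<and> i = a)" for l i
    unfolding g_def
  proof (rule sum.neutral, rule ballI)
    fix f assume f: "f \<in> basis_words l"
    show "coef l i f * basis_elem L l i f (tgt X) (src X) = 0"
      using E1[OF X _ _ that(2) f] that by fastforce
  qed
  have "local_op L k coef (tgt X) (src X) = (\<Sum>l\<in>{1..k}. \<Sum>i<L. g l i)"
    unfolding local_op_def g_def by simp
  also have "\<dots> = (\<Sum>l\<in>{1..k}. \<Sum>i<L. (if l = k then (if i = a then g k a else 0) else 0))"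
    by (rule sum.cong[OF refl], rule sum.cong[OF refl]) (use g0 in auto)
  also have "\<dots> = (\<Sum>l\<in>{1..k}. (if l = k then g k a else 0))"
  proof (rule sum.cong[OF refl])
    fix l show "(\<Sum>i<L. (if l = k then (if i = a then g k a else 0) else 0)) = (if l = k then g k a else 0)"
      using a by (cases "l = k") simp_all
  qed
  also have "\<dots> = g k a" using Lk by simp
  also have "\<dots> = (\<Sum>f\<in>basis_words k. (if patt f then basis_elem L k a ew (tgt X) (src X)
                     * (coef k a f * (\<Prod>m\<in>Zs f. zv m (src X))) else 0))"
    unfolding g_def
  proof (rule sum.cong[OF refl])
    fix f assume f: "f \<in> basis_words k"
    show "coef k a f * basis_elem L k a f (tgt X) (src X) = (if patt f then basis_elem L k a ew (tgt X) (src X)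
                     * (coef k a f * (\<Prod>m\<in>Zs f. zv m (src X))) else 0)"
    proof (cases "patt f")
      case True
      then show ?thesis using E2[OF True X(1)] by simp
    next
      case False
      have "basis_elem L k a f (tgt X) (src X) = 0"
        using E1[OF X _ _ a f] False Lk by fastforce
      then show ?thesis using False by simp
    qed
  qed
  also have "\<dots> = basis_elem L k a ew (tgt X) (src X) * Phi X"
    unfolding Phi_def sum_distrib_left by (rule sum.cong) auto
  finally show ?thesis .
qed

lemma Zs_sub:
  assumes "patt f" "m \<in> Zs f"
  shows "m \<in> win L k a \<and> m \<noteq> A \<and> m \<noteq> Bm"
proof -
  have "(LZ, m) \<in> set (wl L k a f)" using assms unfolding Zs_def by simp
  then obtain p \<tau> where p: "p < k" "m = ((a + p) mod L, \<tau>)" "LZ = f p \<tau>" using wl_set by blast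
  have "m \<in> win L k a" unfolding win_def using p by auto
  moreover have "m \<noteq> A"
  proof
    assume "m = A"
    then have "p = 0 \<and> \<tau> = \<sigma>" using win_A[OF p(1)] p by simp
    then show False using assms(1) p unfolding patt_def ltr_def by (auto split: if_splits)
  qed
  moreover have "m \<noteq> Bm"
  proof
    assume "m = Bm"
    then have "p = k - 1 \<and> \<tau> = \<sigma>" using win_Bm[OF p(1)] p by simp
    then show False using assms(1) p unfolding patt_def ltr_def by (auto split: if_splits)
  qed
  ultimately show ?thesis by simp
qed

lemma LOC:
  assumes X: "X \<in> configs L" "A \<notin> X" "Bm \<notin> X"
  shows "local_op L k coef (tgt X) (src X) = 0
     \<longleftrightarrow> local_op L k coef (tgt (X \<inter> win L k a)) (src (X \<inter> win L k a)) = 0"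
proof -
  let ?X1 = "X \<inter> win L k a"
  have X1: "?X1 \<in> configs L" "A \<notin> ?X1" "Bm \<notin> ?X1" using X unfolding configs_def by auto
  have P: "Phi X = Phi ?X1"
    unfolding Phi_def
  proof (rule sum.cong[OF refl])
    fix f assume f: "f \<in> basis_words k"
    have "(\<Prod>m\<in>Zs f. zv m (src X)) = (\<Prod>m\<in>Zs f. zv m (src ?X1))" if "patt f"
    proof (rule prod.cong[OF refl])
      fix m assume "m \<in> Zs f"
      then have "m \<in> win L k a" "m \<noteq> A" "m \<noteq> Bm" using Zs_sub[OF that] by auto
      then show "zv m (src X) = zv m (src ?X1)" unfolding zv_def src_def by auto
    qed
    then show "(if patt f then coef k a f * (\<Prod>m\<in>Zs f. zv m (src X)) else 0)
        = (if patt f then coef k a f * (\<Prod>m\<in>Zs f. zv m (src ?X1)) else 0)" by simp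
  qed
  have n1: "basis_elem L k a ew (tgt X) (src X) \<noteq> 0" using Eend[OF X] by auto
  have n2: "basis_elem L k a ew (tgt ?X1) (src ?X1) \<noteq> 0" using Eend[OF X1] by auto
  show ?thesis unfolding Fval[OF X] Fval[OF X1] using n1 n2 P by simp
qed

lemma Zs_ew: "Zs ew = {}"
  unfolding Zs_def wl_def ew_def end_word_def by (auto split: if_splits)

lemma Zs_ne:
  assumes "patt f" "f \<noteq> ew"
  shows "Zs f \<noteq> {}"
proof -
  obtain p \<tau> where ne: "f p \<tau> \<noteq> ew p \<tau>" using assms(2) by (metis ext)
  have p: "p < k"
  proof (rule ccontr)
    assume "\<not> p < k"
    then have "f p \<tau> = LI" using assms(1) unfolding patt_def by auto
    moreover have "ew p \<tau> = LI" using \<open>\<not> p < k\<close> Lk unfolding ew_def end_word_def by auto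
    ultimately show False using ne by simp
  qed
  have e0: "ew 0 \<sigma> = ltr" "ew (k - 1) \<sigma> = ltr" unfolding ew_def end_word_def ltr_def by simp_all
  have f0: "f 0 \<sigma> = ltr" "f (k - 1) \<sigma> = ltr" using assms(1) unfolding patt_def by simp_all
  have nend: "(p, \<tau>) \<noteq> (0, \<sigma>) \<and> (p, \<tau>) \<noteq> (k - 1, \<sigma>)"
  proof
    show "(p, \<tau>) \<noteq> (0, \<sigma>)"
    proof
      assume "(p, \<tau>) = (0, \<sigma>)"
      then show False using ne e0 f0 by simp
    qed
    show "(p, \<tau>) \<noteq> (k - 1, \<sigma>)"
    proof
      assume "(p, \<tau>) = (k - 1, \<sigma>)"
      then show False using ne e0 f0 by simp
    qed
  qed
  have "ew p \<tau> = LI" using nend unfolding ew_def end_word_def by auto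
  then have "f p \<tau> = LZ" using ne assms(1) p nend unfolding patt_def by auto
  then have "(LZ, ((a + p) mod L, \<tau>)) \<in> set (wl L k a f)" using wl_set p by metis
  then show ?thesis unfolding Zs_def by auto
qed

lemma trace:
  assumes H: "\<And>X. X \<in> configs L \<Longrightarrow> A \<notin> X \<Longrightarrow> Bm \<notin> X \<Longrightarrow> local_op L k coef (tgt X) (src X) = 0"
  shows "coef k a ew = 0"
proof -
  define M0 where "M0 = modes L - {A, Bm}"
  have fM0: "finite M0" unfolding M0_def modes_def by simp
  have PX: "Phi X = 0" if "X \<in> Pow M0" for X
  proof -
    have X: "X \<in> configs L" "A \<notin> X" "Bm \<notin> X" using that unfolding M0_def configs_def by auto
    have "basis_elem L k a ew (tgt X) (src X) \<noteq> 0" using Eend[OF X] by auto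
    then show ?thesis using H[OF X] Fval[OF X] by simp
  qed
  have inner: "(\<Sum>X\<in>Pow M0. (if patt f then coef k a f * (\<Prod>m\<in>Zs f. zv m (src X)) else 0))
      = (if f = ew then coef k a ew * of_nat (card (Pow M0)) else 0)" for f
  proof (cases "patt f")
    case False
    then have "f \<noteq> ew" using ew_patt by auto
    then show ?thesis using False by simp
  next
    case True
    have zs: "(\<Prod>m\<in>Zs f. zv m (src X)) = (\<Prod>m\<in>Zs f. zv m X)" for X
    proof (rule prod.cong[OF refl])
      fix m assume "m \<in> Zs f"
      then have "m \<noteq> A" "m \<noteq> Bm" using Zs_sub[OF True] by auto
      then show "zv m (src X) = zv m X" unfolding zv_def src_def by auto
    qed
    have "(\<Sum>X\<in>Pow M0. (if patt f then coef k a f * (\<Prod>m\<in>Zs f. zv m (src X)) else 0))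
        = coef k a f * (\<Sum>X\<in>Pow M0. \<Prod>m\<in>Zs f. zv m X)"
      using True by (simp add: zs sum_distrib_left)
    also have "\<dots> = (if f = ew then coef k a ew * of_nat (card (Pow M0)) else 0)"
    proof (cases "f = ew")
      case True
      then show ?thesis using Zs_ew by simp
    next
      case False
      have sub: "Zs f \<subseteq> M0"
      proof
        fix m assume m: "m \<in> Zs f"
        then have "m \<in> win L k a" "m \<noteq> A" "m \<noteq> Bm" using Zs_sub[OF \<open>patt f\<close>] by auto
        moreover have "win L k a \<subseteq> modes L" unfolding win_def modes_def using L0 by auto
        ultimately show "m \<in> M0" unfolding M0_def by auto
      qed
      have "(\<Sum>X\<in>Pow M0. \<Prod>m\<in>Zs f. zv m X) = 0"
        by (rule hadamard0[OF fM0 sub Zs_ne[OF \<open>patt f\<close> False]])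
      then show ?thesis using False by simp
    qed
    finally show ?thesis .
  qed
  have "0 = (\<Sum>X\<in>Pow M0. Phi X)" using PX by simp
  also have "\<dots> = (\<Sum>f\<in>basis_words k. \<Sum>X\<in>Pow M0. (if patt f then coef k a f * (\<Prod>m\<in>Zs f. zv m (src X)) else 0))"
    unfolding Phi_def by (rule sum.swap)
  also have "\<dots> = (\<Sum>f\<in>basis_words k. (if f = ew then coef k a ew * of_nat (card (Pow M0)) else 0))"
    by (simp only: inner)
  also have "\<dots> = coef k a ew * of_nat (card (Pow M0))"
    using bw_finite ew_bw by simp
  finally have "coef k a ew * of_nat (card (Pow M0)) = 0" by simp
  moreover have "card (Pow M0) \<noteq> 0" using fM0 by (simp add: card_Pow)
  ultimately show ?thesis by simp
qed

end

context FQ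
begin

lemma LOC_G:
  assumes X: "X \<in> configs L" "(a, \<sigma>) \<notin> X" "((a + (k - 1)) mod L, \<sigma>) \<notin> X"
  shows "(if d then (\<lambda>S' S. local_op L k coef S S') else local_op L k coef) X
           (insert (a, \<sigma>) (insert ((a + (k - 1)) mod L, \<sigma>) X)) = 0
     \<longleftrightarrow> (if d then (\<lambda>S' S. local_op L k coef S S') else local_op L k coef) (X \<inter> win L k a)
           (insert (a, \<sigma>) (insert ((a + (k - 1)) mod L, \<sigma>) (X \<inter> win L k a))) = 0"
proof -
  have X': "X \<in> configs L" "A \<notin> X" "Bm \<notin> X" using X unfolding A_def Bm_def by auto
  show ?thesis using LOC[OF X'] unfolding tgt_def src_def A_def Bm_def by (cases d) auto
qed

lemma coef_zero:
  assumes H: "\<And>X. X \<in> configs L \<Longrightarrow> (a, \<sigma>) \<notin> X \<Longrightarrow> ((a + (k - 1)) mod L, \<sigma>) \<notin> X \<Longrightarrow>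
     (if d then (\<lambda>S' S. local_op L k coef S S') else local_op L k coef) X
           (insert (a, \<sigma>) (insert ((a + (k - 1)) mod L, \<sigma>) X)) = 0"
  shows "coef k a (end_word k \<sigma> d) = 0"
proof -
  have "coef k a ew = 0"
  proof (rule trace)
    fix X assume X: "X \<in> configs L" "A \<notin> X" "Bm \<notin> X"
    then have "(a, \<sigma>) \<notin> X" "((a + (k - 1)) mod L, \<sigma>) \<notin> X" unfolding A_def Bm_def by auto
    from H[OF X(1) this] show "local_op L k coef (tgt X) (src X) = 0"
      unfolding tgt_def src_def A_def Bm_def by (cases d) auto
  qed
  then show ?thesis unfolding ew_def .
qed

end

lemma SP_transpose: "SP L k G \<Longrightarrow> SP L k (\<lambda>S' S. G S S')"
  unfolding SP_def
proof (intro allI impI)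
  fix S' S assume H: "\<forall>S' S. S' \<in> configs L \<longrightarrow> S \<in> configs L \<longrightarrow> G S' S \<noteq> 0 \<longrightarrow> coverable L k {m. (m \<in> S') \<noteq> (m \<in> S)}"
    and c: "S' \<in> configs L" "S \<in> configs L" and ne: "G S S' \<noteq> 0"
  have "coverable L k {m. (m \<in> S) \<noteq> (m \<in> S')}" using H c ne by blast
  moreover have "{m. (m \<in> S) \<noteq> (m \<in> S')} = {m. (m \<in> S') \<noteq> (m \<in> S)}" by auto
  ultimately show "coverable L k {m. (m \<in> S') \<noteq> (m \<in> S)}" by simp
qed

lemma win_mod: "win L k (a mod L) = win L k a"
  unfolding win_def by (simp add: mod_add_left_eq)

theorem lemma9:
  fixes L k :: nat and U :: real
    and coef :: "nat \<Rightarrow> nat \<Rightarrow> (nat \<Rightarrow> bool \<Rightarrow> letter) \<Rightarrow> complex"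
  assumes "U \<noteq> 0"
    and "2 \<le> k" and "k < L div 2"
    and "is_k_local_conserved L U k coef"
  shows "\<forall>\<sigma> s. \<forall>i<L. coef k i (end_word k \<sigma> s) = 0"
proof (intro allI impI)
  fix \<sigma> s i assume i: "i < L"
  have Lk: "2 * k + 2 \<le> L" using assms(3) by linarith
  have L0: "0 < L" using Lk by simp
  define F where "F = local_op L k coef"
  have comm: "commutes L F (hubbard L U)" using assms(4) unfolding is_k_local_conserved_def F_def by simp
  define G where "G = (if s then (\<lambda>S' S. F S S') else F)"
  have SPG: "SP L k G" unfolding G_def F_def using local_op_SP[OF L0] SP_transpose by auto
  have commG: "commutes L G (hubbard L U)" unfolding G_def using comm comm_transpose[OF comm L0] by auto
  interpret C: CQ L k U G \<sigma> using Lk assms(2) SPG commG by unfold_locales auto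
  have FQi: "FQ L k (a mod L)" for a
    using Lk assms(2) L0 by unfold_locales auto
  have md: "(a mod L + (k - 1)) mod L = (a + (k - 1)) mod L" for a by (simp add: mod_add_left_eq)
  have LOC: "G X (insert (a mod L, \<sigma>) (insert ((a + (k - 1)) mod L, \<sigma>) X)) = 0
        \<longleftrightarrow> G (X \<inter> win L k a) (insert (a mod L, \<sigma>) (insert ((a + (k - 1)) mod L, \<sigma>) (X \<inter> win L k a))) = 0"
    if "X \<in> configs L" "(a mod L, \<sigma>) \<notin> X" "((a + (k - 1)) mod L, \<sigma>) \<notin> X" for a X
  proof -
    have t3: "((a mod L + (k - 1)) mod L, \<sigma>) \<notin> X" using that(3) md by simp
    show ?thesis using FQ.LOC_G[OF FQi[of a] that(1,2) t3, where coef=coef and d=s] unfolding md win_mod G_def F_def by simp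
  qed
  have main: "G X (insert (i mod L, \<sigma>) (insert ((i + (k - 1)) mod L, \<sigma>) X)) = 0"
    if "X \<in> configs L" "(i mod L, \<sigma>) \<notin> X" "((i + (k - 1)) mod L, \<sigma>) \<notin> X" for X
    by (rule C.main_claim[OF assms(1) LOC that])
  have "coef k (i mod L) (end_word k \<sigma> s) = 0"
  proof (rule FQ.coef_zero[OF FQi[of i], where coef=coef and d=s and \<sigma>=\<sigma>])
    fix X assume "X \<in> configs L" "(i mod L, \<sigma>) \<notin> X" "((i mod L + (k - 1)) mod L, \<sigma>) \<notin> X"
    then show "(if s then (\<lambda>S' S. local_op L k coef S S') else local_op L k coef) X
           (insert (i mod L, \<sigma>) (insert ((i mod L + (k - 1)) mod L, \<sigma>) X)) = 0"
      using main unfolding md G_def F_def by simp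
  qed
  then show "coef k i (end_word k \<sigma> s) = 0" using i by simp
qed

end
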